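(* Let $\lambda$ be a Young diagram with $|\lambda|=n$ and Frobenius coordinates $(p_1>\dots>p_d\ge0\,|\,q_1>\dots>q_d\ge0)$, and let $\rho=(\rho_1,\dots,\rho_k)$ be a sequence of positive integers with $\rho_1+\dots+\rho_k=n$. Then $$\chi^\lambda_\rho=\sum_T\operatorname{sgn}T,$$ where the sum is over all filled structures $T$ with $k$ blocks whose cardinality is $(\rho_1,\dots,\rho_k)$ and whose fragments' filling p-numbers $\{P_1,\dots,P_d\}$ and filling q-numbers $\{Q_1,\dots,Q_d\}$ coincide, up to a permutation, with $\{p_1,\dots,p_d\}$ and $\{q_1,\dots,q_d\}$ respectively.
   Context: $\chi^\lambda_\rho$ denotes the value of the irreducible character $\chi^\lambda$ of $S_n$ at a permutation with cycle lengths $\rho_1,\dots,\rho_k$. Frobenius coordinates: $p_i=\lambda_i-i$, $q_i=\lambda'_i-i$ for $1\le i\le d$, $d$ the number of diagonal boxes. A filled structure with $k$ blocks consists of: a partition of $\{1,\dots,k\}$ into unordered nonempty classes called fragments; in each fragment the smallest element is a hook block and every other element is declared either a linear horizontal block or a linear vertical block; each linear block carries a positive integer value (its cardinality), and each hook block carries a pair $(p,q)$ of nonnegative integers (its cardinality being $p+q+1$). The cardinality of $T$ is the sequence of cardinalities of blocks $1,\dots,k$ in order. For a fragment, its filling p-number $P$ is $p$ of its hook block plus the sum of the values of its horizontal blocks, and its filling q-number $Q$ is $q$ of its hook block plus the sum of the values of its vertical blocks. Let $\upsilon(T)$ be the number of vertical blocks in $T$. Numbering the fragments $1,\dots,d$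 arbitrarily with p/q-numbers $(P_i,Q_i)$, $\operatorname{sgn}T=\operatorname{sgn}\big(\prod_{i<j}(P_i-P_j)(Q_i-Q_j)\big)(-1)^{\sum_jQ_j+\upsilon(T)}$ (independent of the numbering; $\operatorname{sgn}0=0$). *)

theory Defs
  imports Main "HOL-Library.FuncSet" "HOL-Library.Multiset" "HOL-Combinatorics.Permutations"
begin

text \<open>A Young diagram is the list of its (positive) row lengths, weakly decreasing.
  Rows are 0-indexed in the list: lam!i is the paper's lambda_(i+1).\<close>

definition young_diagram :: "nat list \<Rightarrow> bool" where
  "young_diagram lam \<longleftrightarrow> sorted (rev lam) \<and> (\<forall>x\<in>set lam. 0 < x)"

definition conj_len :: "nat list \<Rightarrow> nat \<Rightarrow> nat" where
  "conj_len lam j = length (filter (\<lambda>x. j \<le> x) lam)"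

definition diag :: "nat list \<Rightarrow> nat" where
  "diag lam = card {i. i < length lam \<and> Suc i \<le> lam ! i}"

definition frob_p :: "nat list \<Rightarrow> nat list" where
  "frob_p lam = map (\<lambda>i. lam ! i - Suc i) [0..<diag lam]"

definition frob_q :: "nat list \<Rightarrow> nat list" where
  "frob_q lam = map (\<lambda>i. conj_len lam (Suc i) - Suc i) [0..<diag lam]"

text \<open>chi^lambda_rho is the coefficient of x^(lambda+delta) in a_delta * p_rho
  in l = length lam variables, delta = (l-1,...,1,0), a_delta the Vandermonde
  alternant and p_rho the product of power sums.  Expanded: sum over the choice
  f of the variable picked from each power-sum factor and over the permutation
  sigma picking the term of the alternant.\<close>

definition sn_char :: "nat list \<Rightarrow> nat list \<Rightarrow> int" where
  "sn_char lam rho =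
    (let l = length lam; k = length rho in
     \<Sum>f \<in> {0..<k} \<rightarrow>\<^sub>E {0..<l}. \<Sum>\<sigma> \<in> {\<sigma>. \<sigma> permutes {0..<l}}.
        (if (\<forall>j<l. lam ! j + (l - 1 - j) = (l - 1 - \<sigma> j) + (\<Sum>i\<in>{i. i < k \<and> f i = j}. rho ! i))
         then sign \<sigma> else 0))"

text \<open>Blocks 1..k of the paper are the list positions 0..k-1.\<close>
datatype block = Hook nat nat | Hor nat | Ver nat

fun bcard :: "block \<Rightarrow> nat" where
  "bcard (Hook p q) = p + q + 1"
| "bcard (Hor v) = v"
| "bcard (Ver v) = v"

fun is_hook :: "block \<Rightarrow> bool" where
  "is_hook (Hook _ _) = True"
| "is_hook _ = False"

fun is_ver :: "block \<Rightarrow> bool" where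
  "is_ver (Ver _) = True"
| "is_ver _ = False"

fun hook_p :: "block \<Rightarrow> nat" where
  "hook_p (Hook p _) = p"
| "hook_p _ = 0"

fun hook_q :: "block \<Rightarrow> nat" where
  "hook_q (Hook _ q) = q"
| "hook_q _ = 0"

fun hor_val :: "block \<Rightarrow> nat" where
  "hor_val (Hor v) = v"
| "hor_val _ = 0"

fun ver_val :: "block \<Rightarrow> nat" where
  "ver_val (Ver v) = v"
| "ver_val _ = 0"

text \<open>A filled structure is a pair (r, b): r!i is the smallest element of the
  fragment of block i (so the fragments are the fibres of r and their minima
  are the fixed points of r), and b!i is the filled block i.\<close>
type_synonym fstruct = "nat list \<times> block list"

definition filled_structure :: "nat \<Rightarrow> fstruct \<Rightarrow> bool" where
  "filled_structure k T \<longleftrightarrow>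
     (case T of (r, b) \<Rightarrow>
        length r = k \<and> length b = k \<and>
        (\<forall>i<k. r ! i \<le> i \<and> r ! (r ! i) = r ! i \<and>
               (r ! i = i \<longleftrightarrow> is_hook (b ! i)) \<and>
               b ! i \<noteq> Hor 0 \<and> b ! i \<noteq> Ver 0))"

definition hooks :: "fstruct \<Rightarrow> nat set" where
  "hooks T = {h. h < length (fst T) \<and> fst T ! h = h}"

definition fragment :: "fstruct \<Rightarrow> nat \<Rightarrow> nat set" where
  "fragment T h = {i. i < length (fst T) \<and> fst T ! i = h}"

definition fillP :: "fstruct \<Rightarrow> nat \<Rightarrow> nat" where
  "fillP T h = hook_p (snd T ! h) + (\<Sum>i\<in>fragment T h. hor_val (snd T ! i))"

definition fillQ :: "fstruct \<Rightarrow> nat \<Rightarrow> nat" where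
  "fillQ T h = hook_q (snd T ! h) + (\<Sum>i\<in>fragment T h. ver_val (snd T ! i))"

definition n_vertical :: "fstruct \<Rightarrow> nat" where
  "n_vertical T = card {i. i < length (snd T) \<and> is_ver (snd T ! i)}"

text \<open>Fragments are numbered by the increasing order of their hook blocks.\<close>
definition sgnT :: "fstruct \<Rightarrow> int" where
  "sgnT T =
     sgn (\<Prod>h\<in>hooks T. \<Prod>h'\<in>{h'\<in>hooks T. h < h'}.
            (int (fillP T h) - int (fillP T h')) * (int (fillQ T h) - int (fillQ T h')))
     * (-1) ^ ((\<Sum>h\<in>hooks T. fillQ T h) + n_vertical T)"

end

theory Submission
  imports Defs
begin

fun Gr :: "nat \<Rightarrow> (nat \<Rightarrow> nat) \<Rightarrow> nat list \<Rightarrow> int" where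
  "Gr l v [] = (\<Sum>\<sigma>\<in>{\<sigma>. \<sigma> permutes {0..<l}}. if (\<forall>j<l. v j = l - 1 - \<sigma> j) then sign \<sigma> else 0)"
| "Gr l v (m # ms) = (\<Sum>j<l. if m \<le> v j then Gr l (v(j := v j - m)) ms else 0)"

lemma Gr_cong: "(\<forall>j<l. v j = v' j) \<Longrightarrow> Gr l v ms = Gr l v' ms"
proof (induction ms arbitrary: v v')
  case Nil
  then show ?case by simp
next
  case (Cons m ms)
  have "\<And>j. j < l \<Longrightarrow> Gr l (v(j := v j - m)) ms = Gr l (v'(j := v' j - m)) ms"
    by (rule Cons.IH) (use Cons.prems in auto)
  then show ?case using Cons.prems by (auto intro!: sum.cong)
qed

lemma Gr_perm:
  assumes "\<tau> permutes {0..<l}"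
  shows "Gr l (v \<circ> \<tau>) ms = sign \<tau> * Gr l v ms"
  using assms
proof (induction ms arbitrary: v)
  case Nil
  have pt: "permutation \<tau>" using Nil.prems permutation_permutes by blast
  have "Gr l (v \<circ> \<tau>) [] = (\<Sum>\<sigma>\<in>{\<sigma>. \<sigma> permutes {0..<l}}.
      if (\<forall>j<l. v (\<tau> j) = l - 1 - \<sigma> j) then sign \<sigma> else 0)"
    by simp
  also have "\<dots> = (\<Sum>\<sigma>\<in>{\<sigma>. \<sigma> permutes {0..<l}}.
      if (\<forall>j<l. v (\<tau> j) = l - 1 - (\<sigma> \<circ> \<tau>) j) then sign (\<sigma> \<circ> \<tau>) else 0)"
    by (rule sum_permutations_compose_right[OF Nil.prems])
  also have "\<dots> = (\<Sum>\<sigma>\<in>{\<sigma>. \<sigma> permutes {0..<l}}.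
      sign \<tau> * (if (\<forall>j<l. v j = l - 1 - \<sigma> j) then sign \<sigma> else 0))"
  proof (rule sum.cong[OF refl])
    fix \<sigma> assume "\<sigma> \<in> {\<sigma>. \<sigma> permutes {0..<l}}"
    then have ps: "permutation \<sigma>" using permutation_permutes by blast
    have eq: "(\<forall>j<l. v (\<tau> j) = l - 1 - (\<sigma> \<circ> \<tau>) j) \<longleftrightarrow> (\<forall>j<l. v j = l - 1 - \<sigma> j)"
    proof
      assume h: "\<forall>j<l. v (\<tau> j) = l - 1 - (\<sigma> \<circ> \<tau>) j"
      show "\<forall>j<l. v j = l - 1 - \<sigma> j"
      proof (intro allI impI)
        fix j assume "j < l"
        then have "inv \<tau> j < l" using Nil.prems
          by (metis atLeastLessThan_iff permutes_inv permutes_in_image zero_le)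
        then have "v (\<tau> (inv \<tau> j)) = l - 1 - \<sigma> (\<tau> (inv \<tau> j))" using h by auto
        then show "v j = l - 1 - \<sigma> j" using Nil.prems by (simp add: permutes_inverses(1))
      qed
    next
      assume h: "\<forall>j<l. v j = l - 1 - \<sigma> j"
      show "\<forall>j<l. v (\<tau> j) = l - 1 - (\<sigma> \<circ> \<tau>) j"
        using h Nil.prems by (metis atLeastLessThan_iff comp_apply permutes_in_image zero_le)
    qed
    show "(if (\<forall>j<l. v (\<tau> j) = l - 1 - (\<sigma> \<circ> \<tau>) j) then sign (\<sigma> \<circ> \<tau>) else 0) =
      sign \<tau> * (if (\<forall>j<l. v j = l - 1 - \<sigma> j) then sign \<sigma> else 0)"
      unfolding eq by (simp add: sign_compose[OF ps pt])
  qed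
  also have "\<dots> = sign \<tau> * Gr l v []" by (simp add: sum_distrib_left)
  finally show ?case .
next
  case (Cons m ms)
  have "Gr l (v \<circ> \<tau>) (m # ms) = (\<Sum>j<l. if m \<le> v (\<tau> j) then Gr l ((v(\<tau> j := v (\<tau> j) - m)) \<circ> \<tau>) ms else 0)"
  proof -
    have "\<And>j. j < l \<Longrightarrow> Gr l ((v \<circ> \<tau>)(j := v (\<tau> j) - m)) ms = Gr l ((v(\<tau> j := v (\<tau> j) - m)) \<circ> \<tau>) ms"
      by (rule Gr_cong) (use Cons.prems in \<open>auto dest: permutes_inj simp: inj_eq\<close>)
    then show ?thesis by (auto intro!: sum.cong)
  qed
  also have "\<dots> = (\<Sum>j<l. sign \<tau> * (if m \<le> v (\<tau> j) then Gr l (v(\<tau> j := v (\<tau> j) - m)) ms else 0))"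
  proof (intro sum.cong refl)
    fix j
    show "(if m \<le> v (\<tau> j) then Gr l ((v(\<tau> j := v (\<tau> j) - m)) \<circ> \<tau>) ms else 0) =
      sign \<tau> * (if m \<le> v (\<tau> j) then Gr l (v(\<tau> j := v (\<tau> j) - m)) ms else 0)"
      by (cases "m \<le> v (\<tau> j)") (simp_all only: if_True if_False Cons.IH[OF Cons.prems] mult_zero_right)
  qed
  also have "\<dots> = sign \<tau> * (\<Sum>j<l. (if m \<le> v j then Gr l (v(j := v j - m)) ms else 0))"
  proof -
    have "inj_on \<tau> {..<l}" using Cons.prems permutes_inj_on by blast
    moreover have "\<tau> ` {..<l} = {..<l}" using Cons.prems permutes_image
      by (metis atLeast0LessThan)
    ultimately have bij: "bij_betw \<tau> {..<l} {..<l}" by (simp add: bij_betw_def)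
    show ?thesis
      by (simp only: sum_distrib_left[symmetric] sum.reindex_bij_betw[OF bij, of "\<lambda>j. if m \<le> v j then Gr l (v(j := v j - m)) ms else 0"])
  qed
  also have "\<dots> = sign \<tau> * Gr l v (m # ms)" by (simp only: Gr.simps)
  finally show ?case .
qed

lemma Gr_rep:
  assumes "j < l" "j' < l" "j \<noteq> j'" "v j = v j'"
  shows "Gr l v ms = 0"
proof -
  have tp: "Transposition.transpose j j' permutes {0..<l}"
    using assms by (intro permutes_swap_id) auto
  have "Gr l (v \<circ> Transposition.transpose j j') ms = Gr l v ms"
    by (rule Gr_cong) (use assms in \<open>auto simp: transpose_def\<close>)
  moreover have "Gr l (v \<circ> Transposition.transpose j j') ms = - Gr l v ms"
    using Gr_perm[OF tp] assms by (simp add: sign_swap_id)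
  ultimately show ?thesis by simp
qed

definition cyc :: "nat \<Rightarrow> nat \<Rightarrow> nat \<Rightarrow> nat" where
  "cyc j r i = (if j \<le> i \<and> i < j + r then i + 1 else if i = j + r then j else i)"

lemma cyc_0: "cyc j 0 = id"
  by (auto simp: cyc_def fun_eq_iff)

lemma cyc_Suc: "cyc j (Suc r) = cyc j r \<circ> Transposition.transpose (j + r) (j + r + 1)"
  by (auto simp: cyc_def fun_eq_iff transpose_def)

lemma cyc_sign: "permutation (cyc j r) \<and> sign (cyc j r) = (-1) ^ r"
proof (induction r)
  case 0
  then show ?case by (simp add: cyc_0)
next
  case (Suc r)
  have pt: "permutation (Transposition.transpose (j + r) (j + r + 1))"
    by (rule permutation_swap_id)
  have p1: "permutation (cyc j r \<circ> Transposition.transpose (j + r) (j + r + 1))"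
    using Suc pt by (intro permutation_compose) auto
  have s1: "sign (cyc j r \<circ> Transposition.transpose (j + r) (j + r + 1)) = sign (cyc j r) * sign (Transposition.transpose (j + r) (j + r + 1))"
    using Suc pt by (intro sign_compose) auto
  have p2: "permutation (cyc j (Suc r))" by (simp only: cyc_Suc p1)
  have s2: "sign (cyc j (Suc r)) = sign (cyc j r) * sign (Transposition.transpose (j + r) (j + r + 1))"
    by (simp only: cyc_Suc s1)
  show ?case using Suc.IH p2 s2 by (simp add: sign_swap_id)
qed

lemma cyc_permutes: "j + r < l \<Longrightarrow> cyc j r permutes {0..<l}"
proof (induction r)
  case 0
  then show ?case by (simp only: cyc_0 permutes_id)
next
  case (Suc r)
  have "Transposition.transpose (j + r) (j + r + 1) permutes {0..<l}"
    using Suc.prems by (intro permutes_swap_id) auto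
  then show ?case using Suc unfolding cyc_Suc by (intro permutes_compose) auto
qed

definition dec :: "nat \<Rightarrow> (nat \<Rightarrow> nat) \<Rightarrow> bool" where
  "dec l v \<longleftrightarrow> (\<forall>i i'. i < i' \<longrightarrow> i' < l \<longrightarrow> v i' < v i)"

lemma dec_local:
  assumes "\<And>i. Suc i < l \<Longrightarrow> v (Suc i) < v i"
  shows "dec l v"
  unfolding dec_def
proof (intro allI impI)
  fix i i' assume "i < i'" "i' < l"
  then show "v i' < v i"
  proof (induction i' rule: less_induct)
    case (less i')
    then obtain i'' where i'': "i' = Suc i''" by (cases i') auto
    show ?case
    proof (cases "i = i''")
      case True then show ?thesis using assms less.prems i'' by auto
    next
      case False
      then have "v i'' < v i" using less i'' by auto
      moreover have "v i' < v i''" using assms less.prems i'' by auto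
      ultimately show ?thesis by simp
    qed
  qed
qed

lemma dec_inj: "dec l v \<Longrightarrow> inj_on v {0..<l}"
  unfolding dec_def inj_on_def
  by (metis atLeastLessThan_iff linorder_neqE_nat nat_less_le)

lemma downclosed_nat:
  assumes "\<And>i i'. i \<le> i' \<Longrightarrow> i' \<in> S \<Longrightarrow> i \<in> S" "finite (S::nat set)"
  shows "S = {..<card S}"
proof (cases "S = {}")
  case True then show ?thesis by simp
next
  case False
  define M where "M = Max S"
  have "M \<in> S" using False assms(2) M_def by simp
  then have "{..M} \<subseteq> S" using assms(1) by auto
  moreover have "S \<subseteq> {..M}" using assms(2) M_def by auto
  ultimately have "S = {..M}" by blast
  then show ?thesis by (simp add: lessThan_Suc_atMost[symmetric])
qed

lemma LHS_one:
  assumes dv: "dec l v" and jl: "j < l" and mj: "m \<le> v j" and m0: "0 < m"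
    and IH: "\<forall>v'. dec l v' \<longrightarrow> Gr l v' ms = F (v' ` {0..<l})"
  shows "Gr l (v(j := v j - m)) ms =
    (if v j - m \<in> v ` {0..<l} then 0 else
      (-1) ^ card {y \<in> v ` {0..<l}. v j - m < y \<and> y < v j} * F (insert (v j - m) (v ` {0..<l} - {v j})))"
proof (cases "v j - m \<in> v ` {0..<l}")
  case True
  then obtain j' where j': "j' < l" "v j' = v j - m" by auto
  have "j' \<noteq> j" using j' m0 mj by auto
  then have "Gr l (v(j := v j - m)) ms = 0"
    by (intro Gr_rep[of j l j']) (use jl j' in auto)
  then show ?thesis using True by simp
next
  case False
  define x where "x = v j - m"
  define C where "C = v ` {0..<l}"
  define S where "S = {i. i < l \<and> x < v i}"
  define n where "n = card S"
  have xC: "x \<notin> C" using False x_def C_def by simp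
  have Sdc: "S = {..<n}" unfolding n_def
  proof (rule downclosed_nat)
    fix i i' assume "i \<le> i'" "i' \<in> S"
    then show "i \<in> S" using dv unfolding S_def dec_def
      by (metis (mono_tags, lifting) le_less_trans mem_Collect_eq nat_less_le order.strict_trans)
  qed (auto simp: S_def)
  have memS: "\<And>i. i \<in> S \<longleftrightarrow> i < l \<and> x < v i" by (simp add: S_def)
  have memn: "\<And>i. i \<in> S \<longleftrightarrow> i < n" using Sdc by (simp only: lessThan_iff)
  have jS: "j \<in> S" using jl mj m0 x_def by (simp add: S_def)
  have nl: "n \<le> l"
  proof -
    have "S \<subseteq> {..<l}" by (auto simp: S_def)
    then show ?thesis unfolding n_def by (metis card_lessThan card_mono finite_lessThan)
  qed
  have jn: "j < n" using jS memn by blast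
  define r where "r = n - 1 - j"
  have jr: "j + r < l" using jn nl r_def by auto
  have big: "x < v i" if "i < l" "i < n" for i
  proof -
    have "i \<in> S" using that(2) by (simp only: memn)
    then show ?thesis by (simp only: memS)
  qed
  have small: "\<And>i. i < l \<Longrightarrow> n \<le> i \<Longrightarrow> v i < x"
  proof -
    fix i assume "i < l" "n \<le> i"
    then have "i \<notin> S" by (simp only: memn not_less)
    then have "\<not> x < v i" using \<open>i < l\<close> by (simp only: memS simp_thms)
    moreover have "v i \<noteq> x"
    proof -
      have "v i \<in> C" using \<open>i < l\<close> by (simp add: C_def)
      then show ?thesis using xC by metis
    qed
    ultimately show "v i < x" by simp
  qed
  define w where "w = v(j := x)"
  define w' where "w' = w \<circ> cyc j r"
  have cp: "cyc j r permutes {0..<l}" using cyc_permutes jr by blast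
  have sg: "Gr l w' ms = (-1) ^ r * Gr l w ms"
    using Gr_perm[OF cp] cyc_sign unfolding w'_def by simp
  have w'e: "\<And>i. w' i = (if j \<le> i \<and> i < j + r then v (i + 1) else if i = j + r then x else v i)"
    by (auto simp: w'_def w_def cyc_def)
  have dw': "dec l w'"
  proof (rule dec_local)
    fix i assume il: "Suc i < l"
    have d: "\<And>a b. a < b \<Longrightarrow> b < l \<Longrightarrow> v b < v a" using dv unfolding dec_def by blast
    consider "Suc i < j" | "Suc i = j" | "j \<le> i \<and> Suc i < j + r" | "Suc i = j + r" | "i = j + r" | "j + r < i"
      by linarith
    then show "w' (Suc i) < w' i"
    proof cases
      case 1 then show ?thesis using d il by (simp add: w'e)
    next
      case 2
      then show ?thesis
      proof (cases "r = 0")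
        case True then show ?thesis using 2 big[of i] jn x_def mj d[of i j] il jl
          by (simp add: w'e x_def)
      next
        case False then show ?thesis using 2 d[of i "Suc j"] jr by (simp add: w'e)
      qed
    next
      case 3 then show ?thesis using d[of "Suc i" "Suc (Suc i)"] jr by (simp add: w'e)
    next
      case 4 then show ?thesis using big[of "Suc i"] big[of i] r_def jn jr by (simp add: w'e)
    next
      case 5
      then have si: "Suc i = n" using r_def jn by simp
      have "w' (Suc i) = v (Suc i)" using si 5 by (simp add: w'e)
      moreover have "w' i = x" using 5 by (simp add: w'e)
      ultimately show ?thesis using small[of "Suc i"] si il by simp
    next
      case 6 then show ?thesis using d il by (simp add: w'e)
    qed
  qed
  have img: "w' ` {0..<l} = insert x (C - {v j})"
  proof -
    have "w' ` {0..<l} = w ` (cyc j r ` {0..<l})" by (simp add: w'_def image_comp)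
    also have "\<dots> = w ` {0..<l}" using permutes_image[OF cp] by simp
    also have "\<dots> = insert x (v ` ({0..<l} - {j}))" using jl by (auto simp: w_def)
    also have "v ` ({0..<l} - {j}) = C - {v j}" unfolding C_def
      using dec_inj[OF dv] jl by (simp add: inj_on_image_set_diff)
    finally show ?thesis .
  qed
  have cnt: "card {y \<in> C. x < y \<and> y < v j} = r"
  proof -
    have "{y \<in> C. x < y \<and> y < v j} = v ` {j<..<n}"
    proof
      show "{y \<in> C. x < y \<and> y < v j} \<subseteq> v ` {j<..<n}"
      proof
        fix y assume "y \<in> {y \<in> C. x < y \<and> y < v j}"
        then obtain i where i: "i < l" "y = v i" "x < v i" "v i < v j" by (auto simp: C_def)
        have "i < n" using i big small by (meson not_le order.asym)
        moreover have "j < i" using i dv jl unfolding dec_def by (metis linorder_neqE_nat order.asym)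
        ultimately show "y \<in> v ` {j<..<n}" using i by auto
      qed
    next
      show "v ` {j<..<n} \<subseteq> {y \<in> C. x < y \<and> y < v j}"
        using big nl dv unfolding C_def dec_def by auto
    qed
    moreover have "inj_on v {j<..<n}" using dec_inj[OF dv] nl
      by (auto intro: inj_on_subset)
    ultimately show ?thesis using r_def by (simp add: card_image)
  qed
  have "Gr l w ms = (-1) ^ r * Gr l w' ms" using sg by (simp add: power_mult_distrib[symmetric])
  also have "Gr l w' ms = F (insert x (C - {v j}))" using IH dw' img by simp
  finally have G: "Gr l w ms = (-1) ^ r * F (insert x (C - {v j}))" .
  show ?thesis unfolding x_def[symmetric] C_def[symmetric] w_def[symmetric]
    by (simp only: G cnt xC if_False)
qed

lemma LHS_sum:
  assumes dv: "dec l v" and m0: "0 < m"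
    and IH: "\<forall>v'. dec l v' \<longrightarrow> Gr l v' ms = F (v' ` {0..<l})"
  shows "Gr l v (m # ms) =
    (\<Sum>c\<in>{c \<in> v ` {0..<l}. m \<le> c \<and> c - m \<notin> v ` {0..<l}}.
      (-1) ^ card {y \<in> v ` {0..<l}. c - m < y \<and> y < c} * F (insert (c - m) (v ` {0..<l} - {c})))"
proof -
  define C where "C = v ` {0..<l}"
  define g where "g c = (if m \<le> c \<and> c - m \<notin> C then
      (-1) ^ card {y \<in> C. c - m < y \<and> y < c} * F (insert (c - m) (C - {c})) else 0)" for c
  have "Gr l v (m # ms) = (\<Sum>j<l. if m \<le> v j then Gr l (v(j := v j - m)) ms else 0)" by simp
  also have "\<dots> = (\<Sum>j<l. g (v j))"
  proof (intro sum.cong refl)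
    fix j assume "j \<in> {..<l}"
    then have jl: "j < l" by simp
    show "(if m \<le> v j then Gr l (v(j := v j - m)) ms else 0) = g (v j)"
    proof (cases "m \<le> v j")
      case True
      show ?thesis using LHS_one[OF dv jl True m0 IH] True unfolding g_def C_def by simp
    next
      case False then show ?thesis unfolding g_def by simp
    qed
  qed
  also have "\<dots> = (\<Sum>c\<in>C. g c)"
  proof -
    have "bij_betw v {..<l} C" using dec_inj[OF dv] unfolding C_def bij_betw_def
      by (simp add: atLeast0LessThan)
    then show ?thesis by (rule sum.reindex_bij_betw)
  qed
  also have "\<dots> = (\<Sum>c\<in>{c \<in> C. m \<le> c \<and> c - m \<notin> C}.
      (-1) ^ card {y \<in> C. c - m < y \<and> y < c} * F (insert (c - m) (C - {c})))"
    unfolding g_def by (rule sum.inter_filter[symmetric]) (simp add: C_def)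
  finally show ?thesis unfolding C_def .
qed

lemma dec_gap: "dec l v \<Longrightarrow> i \<le> i' \<Longrightarrow> i' < l \<Longrightarrow> v i' + (i' - i) \<le> v i"
proof (induction i' rule: less_induct)
  case (less i')
  show ?case
  proof (cases "i = i'")
    case True then show ?thesis by simp
  next
    case False
    then obtain i'' where i'': "i' = Suc i''" "i \<le> i''" using less.prems by (cases i') auto
    have "v i'' + (i'' - i) \<le> v i" by (rule less.IH) (use less.prems i'' in auto)
    moreover have "v i' < v i''" using less.prems i'' unfolding dec_def by auto
    ultimately show ?thesis using i'' by simp
  qed
qed

lemma Gr_base:
  assumes dv: "dec l v"
  shows "Gr l v [] = (if \<forall>j<l. v j = l - 1 - j then 1 else 0)"
proof -
  have key: "(\<forall>j<l. v j = l - 1 - \<sigma> j) \<longleftrightarrow> (\<sigma> = id \<and> (\<forall>j<l. v j = l - 1 - j))"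
    if sp: "\<sigma> permutes {0..<l}" for \<sigma>
  proof
    assume h: "\<forall>j<l. v j = l - 1 - \<sigma> j"
    have vj: "\<forall>j<l. v j = l - 1 - j"
    proof (intro allI impI)
      fix j assume jl: "j < l"
      have s: "\<And>i. i < l \<Longrightarrow> \<sigma> i < l" using sp
        by (metis atLeastLessThan_iff permutes_in_image zero_le)
      have "v 0 \<le> l - 1" using h jl by auto
      moreover have "v j + j \<le> v 0" using dec_gap[OF dv, of 0 j] jl by simp
      moreover have "v (l - 1) + (l - 1 - j) \<le> v j" using dec_gap[OF dv, of j "l - 1"] jl by simp
      ultimately show "v j = l - 1 - j" by linarith
    qed
    have "\<sigma> = id"
    proof
      fix x show "\<sigma> x = id x"
      proof (cases "x < l")
        case True
        have s: "\<sigma> x < l" using sp True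
          by (metis atLeastLessThan_iff permutes_in_image zero_le)
        have "v x = l - 1 - \<sigma> x" using h True by blast
        moreover have "v x = l - 1 - x" using vj True by blast
        ultimately show ?thesis using s True by simp
      next
        case False
        then show ?thesis using sp unfolding permutes_def by auto
      qed
    qed
    then show "\<sigma> = id \<and> (\<forall>j<l. v j = l - 1 - j)" using vj by simp
  next
    assume "\<sigma> = id \<and> (\<forall>j<l. v j = l - 1 - j)"
    then show "\<forall>j<l. v j = l - 1 - \<sigma> j" by simp
  qed
  have "Gr l v [] = (\<Sum>\<sigma>\<in>{\<sigma>. \<sigma> permutes {0..<l}}.
      if \<sigma> = id then (if \<forall>j<l. v j = l - 1 - j then 1 else 0) else 0)"
  proof (simp only: Gr.simps, rule sum.cong[OF refl])
    fix \<sigma> assume "\<sigma> \<in> {\<sigma>. \<sigma> permutes {0..<l}}"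
    then have k: "(\<forall>j<l. v j = l - 1 - \<sigma> j) \<longleftrightarrow> (\<sigma> = id \<and> (\<forall>j<l. v j = l - 1 - j))"
      using key by blast
    show "(if \<forall>j<l. v j = l - 1 - \<sigma> j then sign \<sigma> else 0) =
      (if \<sigma> = id then (if \<forall>j<l. v j = l - 1 - j then 1 else 0) else 0)"
      unfolding k by auto
  qed
  also have "\<dots> = (if \<forall>j<l. v j = l - 1 - j then 1 else 0)"
  proof -
    have "id \<in> {\<sigma>. \<sigma> permutes {0..<l}}" by (simp add: permutes_id)
    then show ?thesis by (subst sum.delta) (auto simp: finite_permutations)
  qed
  finally show ?thesis .
qed

definition Gf :: "nat \<Rightarrow> (nat \<Rightarrow> nat) \<Rightarrow> nat list \<Rightarrow> int" where
  "Gf l v rho = (\<Sum>f \<in> {0..<length rho} \<rightarrow>\<^sub>E {0..<l}. \<Sum>\<sigma> \<in> {\<sigma>. \<sigma> permutes {0..<l}}.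
        (if (\<forall>j<l. v j = (l - 1 - \<sigma> j) + (\<Sum>i\<in>{i. i < length rho \<and> f i = j}. rho ! i))
         then sign \<sigma> else 0))"

lemma sn_char_Gf: "sn_char lam rho = Gf (length lam) (\<lambda>j. lam ! j + (length lam - 1 - j)) rho"
  unfolding sn_char_def Gf_def Let_def by simp

lemma Gf_Nil: "Gf l v [] = Gr l v []"
  unfolding Gf_def by simp

lemma Gf_snoc: "Gf l v (rho @ [m]) = (\<Sum>y<l. if m \<le> v y then Gf l (v(y := v y - m)) rho else 0)"
proof -
  define k where "k = length rho"
  define S :: "(nat \<Rightarrow> nat) \<Rightarrow> nat \<Rightarrow> nat" where "S g j = (\<Sum>i\<in>{i. i < k \<and> g i = j}. rho ! i)" for g j
  define T where "T g = (\<Sum>\<sigma> \<in> {\<sigma>. \<sigma> permutes {0..<l}}.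
        (if (\<forall>j<l. v j = (l - 1 - \<sigma> j) + (\<Sum>i\<in>{i. i < Suc k \<and> g i = j}. (rho @ [m]) ! i))
         then sign \<sigma> else 0))" for g
  have ins: "{0..<Suc k} = insert k {0..<k}" by auto
  have "Gf l v (rho @ [m]) = (\<Sum>f \<in> {0..<Suc k} \<rightarrow>\<^sub>E {0..<l}. T f)"
    unfolding Gf_def T_def k_def by simp
  also have "\<dots> = (\<Sum>p \<in> {0..<l} \<times> ({0..<k} \<rightarrow>\<^sub>E {0..<l}). T ((snd p)(k := fst p)))"
  proof -
    have "inj_on (\<lambda>(y, g). g(k := y)) ({0..<l} \<times> ({0..<k} \<rightarrow>\<^sub>E {0..<l}))"
      using inj_combinator[of k "{0..<k}" "\<lambda>_. {0..<l}"] by simp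
    then have i: "inj_on (\<lambda>p. (snd p)(k := fst p)) ({0..<l} \<times> ({0..<k} \<rightarrow>\<^sub>E {0..<l}))"
      by (simp add: case_prod_beta')
    have "{0..<Suc k} \<rightarrow>\<^sub>E {0..<l} = (\<lambda>(y, g). g(k := y)) ` ({0..<l} \<times> ({0..<k} \<rightarrow>\<^sub>E {0..<l}))"
      unfolding ins by (rule PiE_insert_eq)
    then have e: "{0..<Suc k} \<rightarrow>\<^sub>E {0..<l} = (\<lambda>p. (snd p)(k := fst p)) ` ({0..<l} \<times> ({0..<k} \<rightarrow>\<^sub>E {0..<l}))"
      by (simp add: case_prod_beta')
    have b: "bij_betw (\<lambda>p. (snd p)(k := fst p)) ({0..<l} \<times> ({0..<k} \<rightarrow>\<^sub>E {0..<l})) ({0..<Suc k} \<rightarrow>\<^sub>E {0..<l})"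
      using i e by (simp add: bij_betw_def)
    show ?thesis using sum.reindex_bij_betw[OF b, of T] by simp
  qed
  also have "\<dots> = (\<Sum>y\<in>{0..<l}. \<Sum>g \<in> {0..<k} \<rightarrow>\<^sub>E {0..<l}. T (g(k := y)))"
    by (simp add: sum.cartesian_product case_prod_unfold)
  also have "\<dots> = (\<Sum>y<l. if m \<le> v y then Gf l (v(y := v y - m)) rho else 0)"
  proof (rule sum.cong)
    show "{0..<l} = {..<l}" by auto
  next
    fix y assume "y \<in> {..<l}"
    then have yl: "y < l" by simp
    have Seq: "(\<Sum>i\<in>{i. i < Suc k \<and> (g(k := y)) i = j}. (rho @ [m]) ! i) = S g j + (if y = j then m else 0)"
      if "g \<in> {0..<k} \<rightarrow>\<^sub>E {0..<l}" for g j
    proof -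
      have "{i. i < Suc k \<and> (g(k := y)) i = j} = {i. i < k \<and> g i = j} \<union> (if y = j then {k} else {})"
        by auto
      moreover have "(\<Sum>i\<in>{i. i < k \<and> g i = j}. (rho @ [m]) ! i) = S g j"
        unfolding S_def by (rule sum.cong) (auto simp: nth_append k_def)
      ultimately show ?thesis by (auto simp: k_def)
    qed
    show "(\<Sum>g \<in> {0..<k} \<rightarrow>\<^sub>E {0..<l}. T (g(k := y))) =
      (if m \<le> v y then Gf l (v(y := v y - m)) rho else 0)"
    proof (cases "m \<le> v y")
      case True
      have "T (g(k := y)) = (\<Sum>\<sigma> \<in> {\<sigma>. \<sigma> permutes {0..<l}}.
        (if (\<forall>j<l. (v(y := v y - m)) j = (l - 1 - \<sigma> j) + S g j) then sign \<sigma> else 0))"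
        if "g \<in> {0..<k} \<rightarrow>\<^sub>E {0..<l}" for g
        unfolding T_def
      proof (rule sum.cong[OF refl])
        fix \<sigma>
        have "(\<forall>j<l. v j = (l - 1 - \<sigma> j) + (S g j + (if y = j then m else 0))) \<longleftrightarrow>
              (\<forall>j<l. (v(y := v y - m)) j = (l - 1 - \<sigma> j) + S g j)"
          using True yl by auto
        then show "(if (\<forall>j<l. v j = (l - 1 - \<sigma> j) + (\<Sum>i\<in>{i. i < Suc k \<and> (g(k := y)) i = j}. (rho @ [m]) ! i))
         then sign \<sigma> else 0) = (if (\<forall>j<l. (v(y := v y - m)) j = (l - 1 - \<sigma> j) + S g j) then sign \<sigma> else 0)"
          using Seq[OF that] by simp
      qed
      then show ?thesis using True unfolding Gf_def S_def k_def by simp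
    next
      case False
      have "T (g(k := y)) = 0" if "g \<in> {0..<k} \<rightarrow>\<^sub>E {0..<l}" for g
        unfolding T_def
      proof (rule sum.neutral, intro ballI)
        fix \<sigma>
        have "\<not> (\<forall>j<l. v j = (l - 1 - \<sigma> j) + (S g j + (if y = j then m else 0)))"
          using False yl by force
        then show "(if (\<forall>j<l. v j = (l - 1 - \<sigma> j) + (\<Sum>i\<in>{i. i < Suc k \<and> (g(k := y)) i = j}. (rho @ [m]) ! i))
         then sign \<sigma> else 0) = 0"
          using Seq[OF that] by simp
      qed
      then show ?thesis using False by simp
    qed
  qed
  finally show ?thesis .
qed

lemma Gf_Gr: "Gf l v rho = Gr l v (rev rho)"
proof (induction rho arbitrary: v rule: rev_induct)
  case Nil
  then show ?case by (simp add: Gf_Nil)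
next
  case (snoc m rho)
  have r: "rev (rho @ [m]) = m # rev rho" by simp
  show ?case by (simp only: Gf_snoc snoc.IH r Gr.simps)
qed

definition D :: "nat set \<Rightarrow> (nat \<Rightarrow> nat \<Rightarrow> int) \<Rightarrow> int" where
  "D H F = (\<Prod>h\<in>H. \<Prod>h'\<in>{h'\<in>H. h < h'}. F h h')"

lemma D_cong: "(\<And>h h'. h \<in> H \<Longrightarrow> h' \<in> H \<Longrightarrow> F h h' = G h h') \<Longrightarrow> D H F = D H G"
  unfolding D_def by (intro prod.cong refl) auto

lemma D_split:
  assumes fin: "finite H" and h0: "h0 \<in> H"
  shows "D H F = D (H - {h0}) F * (\<Prod>h\<in>H - {h0}. if h < h0 then F h h0 else F h0 h)"
proof -
  define H' where "H' = H - {h0}"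
  have HH: "H = insert h0 H'" "h0 \<notin> H'" "finite H'" using h0 fin by (auto simp: H'_def)
  have in1: "(\<Prod>h'\<in>{h'\<in>H. h < h'}. F h h') =
      (\<Prod>h'\<in>{h'\<in>H'. h < h'}. F h h') * (if h < h0 then F h h0 else 1)" if "h \<in> H'" for h
  proof (cases "h < h0")
    case True
    have "{h'\<in>H. h < h'} = insert h0 {h'\<in>H'. h < h'}" using True HH by auto
    then show ?thesis using True HH by (simp add: mult.commute)
  next
    case False
    have "{h'\<in>H. h < h'} = {h'\<in>H'. h < h'}" using False HH by auto
    then show ?thesis using False by simp
  qed
  have in0: "(\<Prod>h'\<in>{h'\<in>H. h0 < h'}. F h0 h') = (\<Prod>h\<in>H'. if h0 < h then F h0 h else 1)"
  proof -
    have "{h'\<in>H. h0 < h'} = {h'\<in>H'. h0 < h'}" using HH by auto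
    then show ?thesis using HH by (simp add: prod.inter_filter)
  qed
  have "D H F = (\<Prod>h'\<in>{h'\<in>H. h0 < h'}. F h0 h') * (\<Prod>h\<in>H'. \<Prod>h'\<in>{h'\<in>H. h < h'}. F h h')"
    unfolding D_def using HH by simp
  also have "\<dots> = (\<Prod>h\<in>H'. if h0 < h then F h0 h else 1) *
      (\<Prod>h\<in>H'. (\<Prod>h'\<in>{h'\<in>H'. h < h'}. F h h') * (if h < h0 then F h h0 else 1))"
    using in0 in1 by simp
  also have "\<dots> = D H' F * (\<Prod>h\<in>H'. (if h < h0 then F h h0 else 1) * (if h0 < h then F h0 h else 1))"
    unfolding D_def prod.distrib by (simp add: ac_simps)
  also have "(\<Prod>h\<in>H'. (if h < h0 then F h h0 else 1) * (if h0 < h then F h0 h else 1)) =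
      (\<Prod>h\<in>H'. if h < h0 then F h h0 else F h0 h)"
  proof (rule prod.cong[OF refl])
    fix h assume "h \<in> H'"
    then have "h \<noteq> h0" using HH by auto
    then show "(if h < h0 then F h h0 else 1) * (if h0 < h then F h0 h else 1) =
      (if h < h0 then F h h0 else F h0 h)" by auto
  qed
  finally show ?thesis unfolding H'_def .
qed

definition FF :: "(nat \<Rightarrow> int) \<Rightarrow> (nat \<Rightarrow> int) \<Rightarrow> nat \<Rightarrow> nat \<Rightarrow> int" where
  "FF X Y h h' = (X h - X h') * (Y h - Y h')"

lemma FF_sym: "FF X Y h h' = FF X Y h' h"
  unfolding FF_def by (simp add: algebra_simps)

lemma FF_comm: "FF X Y = FF Y X"
  unfolding FF_def by (simp add: fun_eq_iff mult.commute)

lemma D_split_sym: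
  assumes "finite H" "h0 \<in> H"
  shows "D H (FF X Y) = D (H - {h0}) (FF X Y) * (\<Prod>h\<in>H - {h0}. FF X Y h h0)"
proof -
  have "(\<Prod>h\<in>H - {h0}. if h < h0 then FF X Y h h0 else FF X Y h0 h) = (\<Prod>h\<in>H - {h0}. FF X Y h h0)"
    by (rule prod.cong[OF refl]) (simp add: FF_sym[of X Y _ h0])
  then show ?thesis using D_split[OF assms, of "FF X Y"] by simp
qed

lemma sgn_diff: "a \<noteq> b \<Longrightarrow> sgn (a - b :: int) = (if a < b then -1 else 1)"
  by (simp add: sgn_if)

lemma prod_pm1: "finite S \<Longrightarrow> (\<Prod>h\<in>S. if P h then -1 else (1::int)) = (-1) ^ card {h\<in>S. P h}"
  by (simp add: prod.If_cases Int_def conj_commute)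

lemma sgn_prod_int: "finite S \<Longrightarrow> sgn (\<Prod>h\<in>S. f h) = (\<Prod>h\<in>S. sgn (f h :: int))"
  by (induction S rule: finite_induct) (auto simp: sgn_mult)

lemma D_hook:
  assumes fin: "finite H" and kH: "\<forall>h\<in>H. h < k"
    and xa: "\<forall>h\<in>H. X h \<noteq> X k" and yb: "\<forall>h\<in>H. Y h \<noteq> Y k"
  shows "sgn (D (insert k H) (FF X Y)) = sgn (D H (FF X Y)) *
     (-1) ^ (card {h\<in>H. X h < X k} + card {h\<in>H. Y h < Y k})"
proof -
  have kn: "k \<notin> H" using kH by auto
  have "D (insert k H) (FF X Y) = D H (FF X Y) * (\<Prod>h\<in>H. FF X Y h k)"
    using D_split_sym[of "insert k H" k X Y] fin kn by simp
  moreover have "sgn (\<Prod>h\<in>H. FF X Y h k) = (-1) ^ (card {h\<in>H. X h < X k} + card {h\<in>H. Y h < Y k})"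
  proof -
    have "sgn (\<Prod>h\<in>H. FF X Y h k) = (\<Prod>h\<in>H. sgn (FF X Y h k))" by (rule sgn_prod_int[OF fin])
    also have "\<dots> = (\<Prod>h\<in>H. (if X h < X k then -1 else 1) * (if Y h < Y k then -1 else 1))"
    proof (rule prod.cong[OF refl])
      fix h assume "h \<in> H"
      then have "X h \<noteq> X k" "Y h \<noteq> Y k" using xa yb by auto
      then show "sgn (FF X Y h k) = (if X h < X k then -1 else 1) * (if Y h < Y k then -1 else 1)"
        unfolding FF_def sgn_mult by (simp add: sgn_diff)
    qed
    also have "\<dots> = (-1) ^ (card {h\<in>H. X h < X k} + card {h\<in>H. Y h < Y k})"
      by (simp add: prod.distrib prod_pm1[OF fin] power_add)
    finally show ?thesis .
  qed
  ultimately show ?thesis by (simp add: sgn_mult)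
qed

lemma D_update:
  assumes fin: "finite H" and h0: "h0 \<in> H"
    and same: "\<forall>h\<in>H - {h0}. X' h = X h" and yy: "\<forall>h\<in>H. Y' h = Y h"
    and nx: "\<forall>h\<in>H - {h0}. X h \<noteq> X h0 \<and> X h \<noteq> X' h0" and le: "X' h0 \<le> X h0"
  shows "sgn (D H (FF X' Y')) = sgn (D H (FF X Y)) *
     (-1) ^ card {h\<in>H - {h0}. X' h0 < X h \<and> X h < X h0}"
proof -
  have f2: "finite (H - {h0})" using fin by simp
  have c: "D (H - {h0}) (FF X' Y') = D (H - {h0}) (FF X Y)"
    by (rule D_cong) (use same yy in \<open>auto simp: FF_def\<close>)
  have "sgn (\<Prod>h\<in>H - {h0}. FF X' Y' h h0) = (\<Prod>h\<in>H - {h0}. sgn (FF X' Y' h h0))"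
    by (rule sgn_prod_int[OF f2])
  also have "\<dots> = (\<Prod>h\<in>H - {h0}. sgn (FF X Y h h0) * (if X' h0 < X h \<and> X h < X h0 then -1 else 1))"
  proof (rule prod.cong[OF refl])
    fix h assume hh: "h \<in> H - {h0}"
    then have a: "X h \<noteq> X h0" "X h \<noteq> X' h0" "X' h = X h" "Y' h = Y h" "Y' h0 = Y h0"
      using nx same yy h0 by auto
    show "sgn (FF X' Y' h h0) = sgn (FF X Y h h0) * (if X' h0 < X h \<and> X h < X h0 then -1 else 1)"
    proof (cases "Y h = Y h0")
      case True then show ?thesis unfolding FF_def a by simp
    next
      case False
      then show ?thesis unfolding FF_def a sgn_mult using a(1,2) le by (auto simp: sgn_diff)
    qed
  qed
  also have "\<dots> = sgn (\<Prod>h\<in>H - {h0}. FF X Y h h0) * (-1) ^ card {h\<in>H - {h0}. X' h0 < X h \<and> X h < X h0}"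
    by (simp add: prod.distrib prod_pm1[OF f2] sgn_prod_int[OF f2])
  finally have l: "sgn (\<Prod>h\<in>H - {h0}. FF X' Y' h h0) = \<dots>" .
  show ?thesis
    unfolding D_split_sym[OF fin h0, of X' Y'] D_split_sym[OF fin h0, of X Y] c
    using l by (simp add: sgn_mult)
qed

lemma D_swap:
  assumes fin: "finite H" and h0: "h0 \<in> H" and h1: "h1 \<in> H" and ne: "h0 \<noteq> h1"
    and x0: "X' h0 = X h1" and x1: "X' h1 = X h0"
    and same: "\<forall>h\<in>H - {h0, h1}. X' h = X h" and yy: "\<forall>h\<in>H. Y' h = Y h"
  shows "D H (FF X' Y') = - D H (FF X Y)"
proof -
  have split2: "D H (FF U V) = D (H - {h0} - {h1}) (FF U V) * FF U V h1 h0 *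
     (\<Prod>h\<in>H - {h0} - {h1}. FF U V h h1 * FF U V h h0)" for U V
  proof -
    have f1: "finite (H - {h0})" using fin by simp
    have h1': "h1 \<in> H - {h0}" using h1 ne by simp
    have "(\<Prod>h\<in>H - {h0}. FF U V h h0) = FF U V h1 h0 * (\<Prod>h\<in>H - {h0} - {h1}. FF U V h h0)"
      using f1 h1' by (simp add: prod.remove)
    then show ?thesis
      unfolding D_split_sym[OF fin h0, of U V] D_split_sym[OF f1 h1', of U V]
      by (simp add: prod.distrib ac_simps)
  qed
  have c: "D (H - {h0} - {h1}) (FF X' Y') = D (H - {h0} - {h1}) (FF X Y)"
    by (rule D_cong) (use same yy in \<open>auto simp: FF_def\<close>)
  have p: "(\<Prod>h\<in>H - {h0} - {h1}. FF X' Y' h h1 * FF X' Y' h h0) = (\<Prod>h\<in>H - {h0} - {h1}. FF X Y h h1 * FF X Y h h0)"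
  proof (rule prod.cong[OF refl])
    fix h assume "h \<in> H - {h0} - {h1}"
    then have a: "X' h = X h" "Y' h = Y h" using same yy by auto
    have b: "Y' h0 = Y h0" "Y' h1 = Y h1" using yy h0 h1 by auto
    show "FF X' Y' h h1 * FF X' Y' h h0 = FF X Y h h1 * FF X Y h h0"
      unfolding FF_def a b x0 x1 by (simp add: algebra_simps)
  qed
  have q: "FF X' Y' h1 h0 = - FF X Y h1 h0"
    unfolding FF_def using x0 x1 yy h0 h1 by (simp add: algebra_simps)
  show ?thesis unfolding split2[of X' Y'] split2[of X Y] c p q by simp
qed

definition FS :: "nat list \<Rightarrow> fstruct set" where
  "FS \<rho> = {T. filled_structure (length \<rho>) T \<and> map bcard (snd T) = \<rho>}"

definition ext :: "fstruct \<Rightarrow> nat \<Rightarrow> block \<Rightarrow> fstruct" where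
  "ext T h blk = (fst T @ [h], snd T @ [blk])"

definition trunc :: "fstruct \<Rightarrow> fstruct" where
  "trunc T = (butlast (fst T), butlast (snd T))"

definition fillG :: "(block \<Rightarrow> nat) \<Rightarrow> (block \<Rightarrow> nat) \<Rightarrow> fstruct \<Rightarrow> nat \<Rightarrow> nat" where
  "fillG gp gv T h = gp (snd T ! h) + (\<Sum>i\<in>fragment T h. gv (snd T ! i))"

lemma fillP_G: "fillP = fillG hook_p hor_val"
  unfolding fillP_def fillG_def by (simp add: fun_eq_iff)

lemma fillQ_G: "fillQ = fillG hook_q ver_val"
  unfolding fillQ_def fillG_def by (simp add: fun_eq_iff)

lemma FS_lens: "T \<in> FS \<rho> \<Longrightarrow> length (fst T) = length \<rho> \<and> length (snd T) = length \<rho>"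
  unfolding FS_def filled_structure_def by (auto split: prod.splits)

lemma FS_prop:
  assumes "T \<in> FS \<rho>" "i < length \<rho>"
  shows "fst T ! i \<le> i \<and> fst T ! (fst T ! i) = fst T ! i \<and> (fst T ! i = i \<longleftrightarrow> is_hook (snd T ! i)) \<and>
    snd T ! i \<noteq> Hor 0 \<and> snd T ! i \<noteq> Ver 0 \<and> bcard (snd T ! i) = \<rho> ! i"
proof -
  obtain r b where T: "T = (r, b)" by (cases T)
  have "map bcard b = \<rho>" using assms(1) T by (simp add: FS_def)
  then have "bcard (b ! i) = \<rho> ! i" using assms(2) by auto
  then show ?thesis using assms T unfolding FS_def filled_structure_def by auto
qed

lemma hooks_sub: "hooks T \<subseteq> {..<length (fst T)}"
  unfolding hooks_def by auto

lemma fragment_sub: "fragment T h \<subseteq> {..<length (fst T)}"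
  unfolding fragment_def by auto

lemma finite_hooks[simp]: "finite (hooks T)"
  using hooks_sub finite_subset by blast

lemma finite_fragment[simp]: "finite (fragment T h)"
  using fragment_sub finite_subset by blast

lemma trunc_ext[simp]: "trunc (ext T h blk) = T"
  unfolding trunc_def ext_def by simp

lemma fst_ext_nth: "i < length (fst T) \<Longrightarrow> fst (ext T h blk) ! i = fst T ! i"
  unfolding ext_def by (simp add: nth_append)

lemma snd_ext_nth: "i < length (snd T) \<Longrightarrow> snd (ext T h blk) ! i = snd T ! i"
  unfolding ext_def by (simp add: nth_append)

lemma ext_FS:
  assumes T: "T \<in> FS \<rho>"
  shows "ext T h blk \<in> FS (\<rho> @ [m]) \<longleftrightarrow>
    (bcard blk = m \<and> blk \<noteq> Hor 0 \<and> blk \<noteq> Ver 0 \<and> (if is_hook blk then h = length \<rho> else h \<in> hooks T))"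
proof -
  obtain r b where Tr: "T = (r, b)" by (cases T)
  define k where "k = length \<rho>"
  have lr: "length r = k" "length b = k" using FS_lens[OF T] Tr k_def by auto
  have old: "\<forall>i<k. r ! i \<le> i \<and> r ! (r ! i) = r ! i \<and> (r ! i = i \<longleftrightarrow> is_hook (b ! i)) \<and>
               b ! i \<noteq> Hor 0 \<and> b ! i \<noteq> Ver 0"
    using T Tr k_def unfolding FS_def filled_structure_def by auto
  have mb: "map bcard b = \<rho>" using T Tr by (simp add: FS_def)
  have "ext T h blk \<in> FS (\<rho> @ [m]) \<longleftrightarrow>
     (\<forall>i<Suc k. (r @ [h]) ! i \<le> i \<and> (r @ [h]) ! ((r @ [h]) ! i) = (r @ [h]) ! i \<and>
               ((r @ [h]) ! i = i \<longleftrightarrow> is_hook ((b @ [blk]) ! i)) \<and>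
               (b @ [blk]) ! i \<noteq> Hor 0 \<and> (b @ [blk]) ! i \<noteq> Ver 0) \<and> bcard blk = m"
    unfolding FS_def filled_structure_def ext_def Tr using lr mb k_def by auto
  also have "(\<forall>i<Suc k. (r @ [h]) ! i \<le> i \<and> (r @ [h]) ! ((r @ [h]) ! i) = (r @ [h]) ! i \<and>
               ((r @ [h]) ! i = i \<longleftrightarrow> is_hook ((b @ [blk]) ! i)) \<and>
               (b @ [blk]) ! i \<noteq> Hor 0 \<and> (b @ [blk]) ! i \<noteq> Ver 0) \<longleftrightarrow>
      (h \<le> k \<and> (r @ [h]) ! h = h \<and> (h = k \<longleftrightarrow> is_hook blk) \<and> blk \<noteq> Hor 0 \<and> blk \<noteq> Ver 0)"
  proof
    assume a: "\<forall>i<Suc k. (r @ [h]) ! i \<le> i \<and> (r @ [h]) ! ((r @ [h]) ! i) = (r @ [h]) ! i \<and>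
               ((r @ [h]) ! i = i \<longleftrightarrow> is_hook ((b @ [blk]) ! i)) \<and>
               (b @ [blk]) ! i \<noteq> Hor 0 \<and> (b @ [blk]) ! i \<noteq> Ver 0"
    then show "h \<le> k \<and> (r @ [h]) ! h = h \<and> (h = k \<longleftrightarrow> is_hook blk) \<and> blk \<noteq> Hor 0 \<and> blk \<noteq> Ver 0"
    proof -
      have "(r @ [h]) ! k \<le> k \<and> (r @ [h]) ! ((r @ [h]) ! k) = (r @ [h]) ! k \<and>
               ((r @ [h]) ! k = k \<longleftrightarrow> is_hook ((b @ [blk]) ! k)) \<and>
               (b @ [blk]) ! k \<noteq> Hor 0 \<and> (b @ [blk]) ! k \<noteq> Ver 0" using a by blast
      then show ?thesis using lr by (simp add: nth_append)
    qed
  next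
    assume a: "h \<le> k \<and> (r @ [h]) ! h = h \<and> (h = k \<longleftrightarrow> is_hook blk) \<and> blk \<noteq> Hor 0 \<and> blk \<noteq> Ver 0"
    show "\<forall>i<Suc k. (r @ [h]) ! i \<le> i \<and> (r @ [h]) ! ((r @ [h]) ! i) = (r @ [h]) ! i \<and>
               ((r @ [h]) ! i = i \<longleftrightarrow> is_hook ((b @ [blk]) ! i)) \<and>
               (b @ [blk]) ! i \<noteq> Hor 0 \<and> (b @ [blk]) ! i \<noteq> Ver 0"
    proof (intro allI impI)
      fix i assume "i < Suc k"
      then consider "i < k" | "i = k" by linarith
      then show "(r @ [h]) ! i \<le> i \<and> (r @ [h]) ! ((r @ [h]) ! i) = (r @ [h]) ! i \<and>
               ((r @ [h]) ! i = i \<longleftrightarrow> is_hook ((b @ [blk]) ! i)) \<and>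
               (b @ [blk]) ! i \<noteq> Hor 0 \<and> (b @ [blk]) ! i \<noteq> Ver 0"
      proof cases
        case 1
        then have "r ! i < k" using old by (meson le_less_trans)
        then show ?thesis using old 1 lr by (simp add: nth_append)
      next
        case 2
        then show ?thesis using a lr by (simp add: nth_append)
      qed
    qed
  qed
  also have "(h \<le> k \<and> (r @ [h]) ! h = h \<and> (h = k \<longleftrightarrow> is_hook blk) \<and> blk \<noteq> Hor 0 \<and> blk \<noteq> Ver 0) \<longleftrightarrow>
      (blk \<noteq> Hor 0 \<and> blk \<noteq> Ver 0 \<and> (if is_hook blk then h = k else h \<in> hooks T))"
    unfolding hooks_def Tr using lr by (auto simp: nth_append)
  finally show ?thesis unfolding k_def by auto
qed

lemma FS_snoc:
  assumes "T \<in> FS (\<rho> @ [m])"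
  shows "trunc T \<in> FS \<rho> \<and> T = ext (trunc T) (last (fst T)) (last (snd T))"
proof -
  obtain r b where Tr: "T = (r, b)" by (cases T)
  define k where "k = length \<rho>"
  have lr: "length r = Suc k" "length b = Suc k" using FS_lens[OF assms] Tr k_def by auto
  have re: "r = butlast r @ [last r]" "b = butlast b @ [last b]" using lr
    by (metis append_butlast_last_id list.size(3) nat.distinct(1))+
  have e: "T = ext (trunc T) (last (fst T)) (last (snd T))"
    unfolding ext_def trunc_def Tr using re by simp
  have old: "\<forall>i<Suc k. r ! i \<le> i \<and> r ! (r ! i) = r ! i \<and> (r ! i = i \<longleftrightarrow> is_hook (b ! i)) \<and>
               b ! i \<noteq> Hor 0 \<and> b ! i \<noteq> Ver 0"
    using assms Tr k_def unfolding FS_def filled_structure_def by auto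
  have mb: "map bcard b = \<rho> @ [m]" using assms Tr by (simp add: FS_def)
  have "filled_structure k (butlast r, butlast b)"
    unfolding filled_structure_def
  proof (simp add: lr, intro allI impI)
    fix i assume ik: "i < k"
    have "r ! i \<le> i" using old ik by auto
    then have "r ! i < k" using ik by simp
    then show "butlast r ! i \<le> i \<and> butlast r ! (butlast r ! i) = butlast r ! i \<and>
         (butlast r ! i = i) = is_hook (butlast b ! i) \<and> butlast b ! i \<noteq> Hor 0 \<and> butlast b ! i \<noteq> Ver 0"
      using old ik lr by (simp add: nth_butlast)
  qed
  moreover have "map bcard (butlast b) = \<rho>" using mb by (simp add: map_butlast)
  ultimately have "trunc T \<in> FS \<rho>" unfolding FS_def trunc_def Tr k_def by simp
  then show ?thesis using e by simp
qed

lemma hooks_ext: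
  assumes T: "T \<in> FS \<rho>" and h: "h \<le> length \<rho>"
  shows "hooks (ext T h blk) = (if h = length \<rho> then insert (length \<rho>) (hooks T) else hooks T)"
  using FS_lens[OF T] h unfolding hooks_def ext_def by (auto simp: nth_append)

lemma fragment_ext:
  assumes T: "T \<in> FS \<rho>"
  shows "fragment (ext T h blk) g = (if g = h then insert (length \<rho>) (fragment T g) else fragment T g)"
  using FS_lens[OF T] unfolding fragment_def ext_def by (auto simp: nth_append less_Suc_eq)

lemma fragment_new_empty:
  assumes T: "T \<in> FS \<rho>"
  shows "fragment T (length \<rho>) = {}"
proof -
  have "fst T ! i \<noteq> length \<rho>" if "i < length \<rho>" for i
  proof -
    have "fst T ! i \<le> i" using FS_prop[OF T that] by simp
    then show ?thesis using that by simp
  qed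
  then show ?thesis using FS_lens[OF T] unfolding fragment_def by auto
qed

lemma fillG_ext:
  assumes T: "T \<in> FS \<rho>" and g: "g < length \<rho>"
  shows "fillG gp gv (ext T h blk) g = fillG gp gv T g + (if g = h then gv blk else 0)"
proof -
  have k: "length \<rho> \<notin> fragment T g" using fragment_sub[of T g] FS_lens[OF T] by auto
  have "\<And>i. i \<in> fragment T g \<Longrightarrow> snd (ext T h blk) ! i = snd T ! i"
    using fragment_sub[of T g] FS_lens[OF T] by (intro snd_ext_nth) auto
  then have s: "(\<Sum>i\<in>fragment T g. gv (snd (ext T h blk) ! i)) = (\<Sum>i\<in>fragment T g. gv (snd T ! i))"
    by simp
  have sl: "snd (ext T h blk) ! length \<rho> = blk" using FS_lens[OF T] by (simp add: ext_def nth_append)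
  have sg: "snd (ext T h blk) ! g = snd T ! g" using g FS_lens[OF T] by (intro snd_ext_nth) auto
  show ?thesis
    unfolding fillG_def fragment_ext[OF T] sg using s k sl by auto
qed

lemma fillG_ext_new:
  assumes T: "T \<in> FS \<rho>"
  shows "fillG gp gv (ext T (length \<rho>) blk) (length \<rho>) = gp blk + gv blk"
  unfolding fillG_def fragment_ext[OF T] fragment_new_empty[OF T] using FS_lens[OF T]
  by (simp add: ext_def nth_append)

lemma nv_ext:
  assumes T: "T \<in> FS \<rho>"
  shows "n_vertical (ext T h blk) = n_vertical T + (if is_ver blk then 1 else 0)"
proof -
  define k where "k = length \<rho>"
  have l: "length (snd T) = k" using FS_lens[OF T] k_def by simp
  have "{i. i < length (snd (ext T h blk)) \<and> is_ver (snd (ext T h blk) ! i)} =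
    {i. i < k \<and> is_ver (snd T ! i)} \<union> (if is_ver blk then {k} else {})"
    using l by (auto simp: ext_def nth_append less_Suc_eq)
  then show ?thesis unfolding n_vertical_def l by auto
qed

lemma sgnT_D: "sgnT T = sgn (D (hooks T) (FF (\<lambda>h. int (fillP T h)) (\<lambda>h. int (fillQ T h)))) *
   (-1) ^ ((\<Sum>h\<in>hooks T. fillQ T h) + n_vertical T)"
  unfolding sgnT_def D_def FF_def by simp

lemma finite_FS: "finite (FS \<rho>)"
proof -
  define N where "N = sum_list \<rho>"
  define BS where "BS = (\<lambda>(p, q). Hook p q) ` ({..N} \<times> {..N}) \<union> Hor ` {..N} \<union> Ver ` {..N}"
  have fBS: "finite BS" unfolding BS_def by simp
  have "FS \<rho> \<subseteq> {r. set r \<subseteq> {..length \<rho>} \<and> length r = length \<rho>} \<times> {b. set b \<subseteq> BS \<and> length b = length \<rho>}"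
  proof
    fix T assume T: "T \<in> FS \<rho>"
    have l: "length (fst T) = length \<rho>" "length (snd T) = length \<rho>" using FS_lens[OF T] by auto
    have "set (fst T) \<subseteq> {..length \<rho>}"
    proof
      fix x assume "x \<in> set (fst T)"
      then obtain i where "i < length \<rho>" "x = fst T ! i" using l by (auto simp: in_set_conv_nth)
      then show "x \<in> {..length \<rho>}" using FS_prop[OF T] by fastforce
    qed
    moreover have "set (snd T) \<subseteq> BS"
    proof
      fix x assume "x \<in> set (snd T)"
      then obtain i where i: "i < length \<rho>" "x = snd T ! i" using l by (auto simp: in_set_conv_nth)
      have "\<rho> ! i \<le> N" unfolding N_def using i(1) by (simp add: member_le_sum_list)
      then have "bcard x \<le> N" using FS_prop[OF T i(1)] i by simp
      then show "x \<in> BS" unfolding BS_def by (cases x) auto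
    qed
    ultimately show "T \<in> {r. set r \<subseteq> {..length \<rho>} \<and> length r = length \<rho>} \<times> {b. set b \<subseteq> BS \<and> length b = length \<rho>}"
      using l by (cases T) auto
  qed
  moreover have "finite ({r. set r \<subseteq> {..length \<rho>} \<and> length r = length \<rho>} \<times> {b. set b \<subseteq> BS \<and> length b = length \<rho>})"
    using fBS by (intro finite_cartesian_product finite_lists_length_eq) auto
  ultimately show ?thesis using finite_subset by blast
qed

definition validG :: "(fstruct \<Rightarrow> nat \<Rightarrow> nat) \<Rightarrow> (fstruct \<Rightarrow> nat \<Rightarrow> nat) \<Rightarrow> nat set \<Rightarrow> nat set \<Rightarrow> nat list \<Rightarrow> fstruct \<Rightarrow> bool" where
  "validG fX fY A B \<rho> T \<longleftrightarrow> T \<in> FS \<rho> \<and> inj_on (fX T) (hooks T) \<and> fX T ` hooks T = A \<and>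
     inj_on (fY T) (hooks T) \<and> fY T ` hooks T = B"

definition sD :: "(fstruct \<Rightarrow> nat \<Rightarrow> nat) \<Rightarrow> (fstruct \<Rightarrow> nat \<Rightarrow> nat) \<Rightarrow> fstruct \<Rightarrow> int" where
  "sD fX fY T = sgn (D (hooks T) (FF (\<lambda>h. int (fX T h)) (\<lambda>h. int (fY T h))))"

lemma sD_comm: "sD fX fY T = sD fY fX T"
  unfolding sD_def by (simp add: FF_comm)

lemma sum_involution_zero:
  assumes fin: "finite S" and iS: "\<And>x. x \<in> S \<Longrightarrow> \<iota> x \<in> S" and ii: "\<And>x. x \<in> S \<Longrightarrow> \<iota> (\<iota> x) = x"
    and fi: "\<And>x. x \<in> S \<Longrightarrow> f (\<iota> x) = - f x"
  shows "sum f S = (0::int)"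
proof -
  have "sum f S = sum (\<lambda>x. f (\<iota> x)) S"
    by (rule sum.reindex_bij_witness[of S \<iota> \<iota>]) (use iS ii in auto)
  also have "\<dots> = - sum f S" using fi by (simp add: sum_negf)
  finally show ?thesis by simp
qed

lemma lin_ext:
  assumes T: "T \<in> FS \<rho>" and h: "h \<in> hooks T"
  shows "hooks (ext T h blk) = hooks T"
    "\<And>g. g \<in> hooks T \<Longrightarrow> fillG gp gv (ext T h blk) g = fillG gp gv T g + (if g = h then gv blk else 0)"
proof -
  have hk: "h < length \<rho>" using h hooks_sub[of T] FS_lens[OF T] by auto
  show "hooks (ext T h blk) = hooks T" using hooks_ext[OF T, of h blk] hk by simp
  fix g assume "g \<in> hooks T"
  then have "g < length \<rho>" using hooks_sub[of T] FS_lens[OF T] by auto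
  then show "fillG gp gv (ext T h blk) g = fillG gp gv T g + (if g = h then gv blk else 0)"
    by (rule fillG_ext[OF T])
qed

lemma lin_decomp:
  assumes T: "T \<in> FS (\<rho> @ [m])" and lb: "last (snd T) = blk" and nh: "\<not> is_hook blk"
  shows "trunc T \<in> FS \<rho> \<and> last (fst T) \<in> hooks (trunc T) \<and> T = ext (trunc T) (last (fst T)) blk"
proof -
  have a: "trunc T \<in> FS \<rho>" "T = ext (trunc T) (last (fst T)) (last (snd T))" using FS_snoc[OF T] by auto
  then have "ext (trunc T) (last (fst T)) blk \<in> FS (\<rho> @ [m])" using T lb by simp
  then have "last (fst T) \<in> hooks (trunc T)" using ext_FS[OF a(1)] nh by simp
  then show ?thesis using a lb by simp
qed

lemma coll_zero:
  assumes gx: "gvx (con m) = m" and gy: "gvy (con m) = 0" and nh: "\<not> is_hook (con m)"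
    and bc: "bcard (con m) = m" and n0: "con m \<noteq> Hor 0" "con m \<noteq> Ver 0" and m0: "0 < m"
    and eps: "\<And>T' h. T' \<in> FS \<rho> \<Longrightarrow> h \<in> hooks T' \<Longrightarrow> eps (ext T' h (con m)) = \<kappa> * eps T'"
  shows "(\<Sum>T\<in>{T. validG (fillG gpx gvx) (fillG gpy gvy) A B (\<rho> @ [m]) T \<and> last (snd T) = con m \<and>
      (\<exists>h1\<in>hooks (trunc T). h1 \<noteq> last (fst T) \<and> fillG gpx gvx (trunc T) h1 = fillG gpx gvx (trunc T) (last (fst T)))}.
      sD (fillG gpx gvx) (fillG gpy gvy) T * eps T) = 0"
proof -
  define fX where "fX = fillG gpx gvx"
  define fY where "fY = fillG gpy gvy"
  define coll where "coll T \<longleftrightarrow> (\<exists>h1\<in>hooks (trunc T). h1 \<noteq> last (fst T) \<and> fX (trunc T) h1 = fX (trunc T) (last (fst T)))" for T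
  define S where "S = {T. validG fX fY A B (\<rho> @ [m]) T \<and> last (snd T) = con m \<and> coll T}"
  define partner where "partner T = (THE h1. h1 \<in> hooks (trunc T) \<and> h1 \<noteq> last (fst T) \<and> fX (trunc T) h1 = fX (trunc T) (last (fst T)))" for T
  define \<iota> where "\<iota> T = ext (trunc T) (partner T) (con m)" for T
  define f where "f T = sD fX fY T * eps T" for T
  have main: "\<iota> T \<in> S \<and> \<iota> (\<iota> T) = T \<and> f (\<iota> T) = - f T" if TS: "T \<in> S" for T
  proof -
    define T' where "T' = trunc T"
    define h0 where "h0 = last (fst T)"
    have v: "validG fX fY A B (\<rho> @ [m]) T" and lb: "last (snd T) = con m" and cl: "coll T"
      using TS by (auto simp: S_def)
    have TFS: "T \<in> FS (\<rho> @ [m])" using v by (simp add: validG_def)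
    have dc: "T' \<in> FS \<rho>" "h0 \<in> (hooks T')" "T = ext T' h0 (con m)"
      using lin_decomp[OF TFS lb nh] by (auto simp: T'_def h0_def)
    have hT: "hooks T = (hooks T')" using lin_ext(1)[OF dc(1,2)] dc(3) by simp
    have fXT: "fX T g = fX T' g + (if g = h0 then m else 0)" if "g \<in> (hooks T')" for g
      using lin_ext(2)[OF dc(1,2), of g gpx gvx "con m"] dc(3) that gx unfolding fX_def by simp
    have fYT: "fY T g = fY T' g" if "g \<in> (hooks T')" for g
      using lin_ext(2)[OF dc(1,2), of g gpy gvy "con m"] dc(3) that gy unfolding fY_def by simp
    have injX: "inj_on (fX T) (hooks T')" using v hT by (simp add: validG_def)
    have uniq: "h1 = h2" if "h1 \<in> (hooks T')" "h1 \<noteq> h0" "fX T' h1 = fX T' h0" "h2 \<in> (hooks T')" "h2 \<noteq> h0" "fX T' h2 = fX T' h0"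
      for h1 h2
    proof -
      have "fX T h1 = fX T h2" using that fXT by simp
      then show ?thesis using injX that by (meson inj_onD)
    qed
    have ex: "\<exists>h1\<in>(hooks T'). h1 \<noteq> h0 \<and> fX T' h1 = fX T' h0" using cl unfolding coll_def T'_def h0_def by blast
    have pp: "partner T \<in> (hooks T') \<and> partner T \<noteq> h0 \<and> fX T' (partner T) = fX T' h0"
      unfolding partner_def T'_def[symmetric] h0_def[symmetric]
      by (rule theI') (use ex uniq in blast)
    define p where "p = partner T"
    have p: "p \<in> (hooks T')" "p \<noteq> h0" "fX T' p = fX T' h0" using pp p_def by auto
    have iT: "\<iota> T = ext T' p (con m)" unfolding \<iota>_def p_def T'_def by simp
    have iFS: "\<iota> T \<in> FS (\<rho> @ [m])" unfolding iT using ext_FS[OF dc(1)] bc n0 nh p(1) by simp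
    have hi: "hooks (\<iota> T) = (hooks T')" using lin_ext(1)[OF dc(1)] p(1) iT by simp
    have fXi: "fX (\<iota> T) g = fX T' g + (if g = p then m else 0)" if "g \<in> (hooks T')" for g
      using lin_ext(2)[OF dc(1), of p g gpx gvx "con m"] p(1) iT that gx unfolding fX_def by simp
    have fYi: "fY (\<iota> T) g = fY T g" if "g \<in> (hooks T')" for g
      using lin_ext(2)[OF dc(1), of p g gpy gvy "con m"] p(1) iT that gy fYT unfolding fY_def by simp
    define \<tau> where "\<tau> = Transposition.transpose h0 p"
    have tp: "\<tau> permutes (hooks T')" unfolding \<tau>_def using dc(2) p(1) by (rule permutes_swap_id)
    have fXs: "fX (\<iota> T) g = fX T (\<tau> g)" if "g \<in> (hooks T')" for g
    proof -
      have "\<tau> g \<in> (hooks T')" using tp that by (simp add: permutes_in_image)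
      then show ?thesis using that fXi fXT p unfolding \<tau>_def by (auto simp: transpose_def)
    qed
    have imX: "fX (\<iota> T) ` (hooks T') = fX T ` (hooks T')"
    proof -
      have "fX (\<iota> T) ` (hooks T') = fX T ` (\<tau> ` (hooks T'))" using fXs by (auto simp: image_iff)
      then show ?thesis using permutes_image[OF tp] by simp
    qed
    have injXi: "inj_on (fX (\<iota> T)) (hooks T')"
    proof -
      have "inj_on (fX T \<circ> \<tau>) (hooks T')"
        using injX permutes_inj_on[OF tp] permutes_image[OF tp] by (simp add: comp_inj_on)
      then show ?thesis using fXs inj_on_cong by (metis comp_apply)
    qed
    have imY: "fY (\<iota> T) ` (hooks T') = fY T ` (hooks T')" using fYi by (auto simp: image_iff)
    have injYi: "inj_on (fY (\<iota> T)) (hooks T')" using v hT fYi by (simp add: validG_def inj_on_def)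
    have vi: "validG fX fY A B (\<rho> @ [m]) (\<iota> T)"
      using v iFS hi imX imY injXi injYi hT by (simp add: validG_def)
    have ti: "trunc (\<iota> T) = T'" "last (fst (\<iota> T)) = p" "last (snd (\<iota> T)) = con m"
      unfolding iT by (auto simp: ext_def trunc_def)
    have cli: "coll (\<iota> T)" unfolding coll_def ti using dc(2) p by auto
    have iS: "\<iota> T \<in> S" unfolding S_def using vi ti cli by simp
    have pi: "partner (\<iota> T) = h0"
      unfolding partner_def ti
    proof (rule the_equality)
      show "h0 \<in> hooks T' \<and> h0 \<noteq> p \<and> fX T' h0 = fX T' p" using dc(2) p by auto
    next
      fix h1 assume h1: "h1 \<in> hooks T' \<and> h1 \<noteq> p \<and> fX T' h1 = fX T' p"
      show "h1 = h0"
      proof (rule ccontr)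
        assume "h1 \<noteq> h0"
        then have "h1 = p" using uniq[of h1 p] h1 p by auto
        then show False using h1 by simp
      qed
    qed
    have ii: "\<iota> (\<iota> T) = T"
    proof -
      have "\<iota> (\<iota> T) = ext (trunc (\<iota> T)) (partner (\<iota> T)) (con m)" by (simp only: \<iota>_def)
      also have "\<dots> = ext T' h0 (con m)" by (simp only: pi ti)
      finally show ?thesis using dc(3) by simp
    qed
    have Dsw: "D (hooks T') (FF (\<lambda>h. int (fX (\<iota> T) h)) (\<lambda>h. int (fY (\<iota> T) h))) =
        - D (hooks T') (FF (\<lambda>h. int (fX T h)) (\<lambda>h. int (fY T h)))"
    proof (rule D_swap[of "hooks T'" h0 p])
      show "finite (hooks T')" by (simp add:)
      show "int (fX (\<iota> T) h0) = int (fX T p)" using fXi fXT p dc(2) by simp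
      show "int (fX (\<iota> T) p) = int (fX T h0)" using fXi fXT p dc(2) by simp
      show "\<forall>h\<in>(hooks T') - {h0, p}. int (fX (\<iota> T) h) = int (fX T h)" using fXi fXT by simp
      show "\<forall>h\<in>(hooks T'). int (fY (\<iota> T) h) = int (fY T h)" using fYi by simp
    qed (use dc(2) p in auto)
    have ei: "eps (\<iota> T) = eps T" using eps[OF dc(1)] p(1) dc(2) iT dc(3) by metis
    have fi: "f (\<iota> T) = - f T"
      unfolding f_def sD_def hi hT Dsw ei by (simp add: sgn_minus)
    show ?thesis using iS ii fi by simp
  qed
  have "sum f S = 0"
  proof (rule sum_involution_zero[of S \<iota>])
    show "finite S"
      by (rule finite_subset[OF _ finite_FS[of "\<rho> @ [m]"]]) (auto simp: S_def validG_def)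
  qed (use main in auto)
  then show ?thesis unfolding f_def S_def coll_def fX_def fY_def .
qed

lemma noncoll_sum:
  assumes gx: "gvx (con m) = m" and gy: "gvy (con m) = 0" and nh: "\<not> is_hook (con m)"
    and bc: "bcard (con m) = m" and n0: "con m \<noteq> Hor 0" "con m \<noteq> Ver 0" and m0: "0 < m"
    and eps: "\<And>T' h. T' \<in> FS \<rho> \<Longrightarrow> h \<in> hooks T' \<Longrightarrow> eps (ext T' h (con m)) = \<kappa> * eps T'"
    and finA: "finite A"
  shows "(\<Sum>T\<in>{T. validG (fillG gpx gvx) (fillG gpy gvy) A B (\<rho> @ [m]) T \<and> last (snd T) = con m \<and>
      \<not> (\<exists>h1\<in>hooks (trunc T). h1 \<noteq> last (fst T) \<and> fillG gpx gvx (trunc T) h1 = fillG gpx gvx (trunc T) (last (fst T)))}.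
      sD (fillG gpx gvx) (fillG gpy gvy) T * eps T) =
    (\<Sum>a\<in>{a\<in>A. m \<le> a \<and> a - m \<notin> A}. \<kappa> * (-1) ^ card {x\<in>A. a - m < x \<and> x < a} *
      (\<Sum>T'\<in>{T'. validG (fillG gpx gvx) (fillG gpy gvy) (insert (a - m) (A - {a})) B \<rho> T'}.
         sD (fillG gpx gvx) (fillG gpy gvy) T' * eps T'))"
proof -
  define fX where "fX = fillG gpx gvx"
  define fY where "fY = fillG gpy gvy"
  define coll where "coll T \<longleftrightarrow> (\<exists>h1\<in>hooks (trunc T). h1 \<noteq> last (fst T) \<and> fX (trunc T) h1 = fX (trunc T) (last (fst T)))" for T
  define S where "S = {T. validG fX fY A B (\<rho> @ [m]) T \<and> last (snd T) = con m \<and> \<not> coll T}"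
  define I where "I = {a\<in>A. m \<le> a \<and> a - m \<notin> A}"
  define V where "V a = {T'. validG fX fY (insert (a - m) (A - {a})) B \<rho> T'}" for a
  define c where "c a = card {x\<in>A. a - m < x \<and> x < a}" for a
  define f where "f T = sD fX fY T * eps T" for T
  define g where "g p = \<kappa> * (-1) ^ c (fst p) * f (snd p)" for p
  define i where "i T = (fX T (last (fst T)), trunc T)" for T
  define j where "j p = ext (snd p) (inv_into (hooks (snd p)) (fX (snd p)) (fst p - m)) (con m)" for p
  have fwd: "i T \<in> Sigma I V \<and> j (i T) = T" if TS: "T \<in> S" for T
  proof -
    define T' where "T' = trunc T"
    define h0 where "h0 = last (fst T)"
    have v: "validG fX fY A B (\<rho> @ [m]) T" and lb: "last (snd T) = con m" and ncl: "\<not> coll T"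
      using TS by (auto simp: S_def)
    have TFS: "T \<in> FS (\<rho> @ [m])" using v by (simp add: validG_def)
    have dc: "T' \<in> FS \<rho>" "h0 \<in> hooks T'" "T = ext T' h0 (con m)"
      using lin_decomp[OF TFS lb nh] by (auto simp: T'_def h0_def)
    have hT: "hooks T = hooks T'" using lin_ext(1)[OF dc(1,2)] dc(3) by simp
    have fXT: "fX T g = fX T' g + (if g = h0 then m else 0)" if "g \<in> hooks T'" for g
      using lin_ext(2)[OF dc(1,2), of g gpx gvx "con m"] dc(3) that gx unfolding fX_def by simp
    have fYT: "fY T g = fY T' g" if "g \<in> hooks T'" for g
      using lin_ext(2)[OF dc(1,2), of g gpy gvy "con m"] dc(3) that gy unfolding fY_def by simp
    have injX: "inj_on (fX T) (hooks T')" and imX: "fX T ` hooks T' = A"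
      and injY: "inj_on (fY T) (hooks T')" and imY: "fY T ` hooks T' = B"
      using v hT by (auto simp: validG_def)
    have ncl': "\<not> (\<exists>h1\<in>hooks T'. h1 \<noteq> h0 \<and> fX T' h1 = fX T' h0)"
      using ncl by (simp add: coll_def T'_def h0_def)
    have nc: "fX T' h1 \<noteq> fX T' h0" if "h1 \<in> hooks T'" "h1 \<noteq> h0" for h1
      using ncl' that by auto
    define a where "a = fX T h0"
    have aA: "a \<in> A"
    proof -
      have "fX T h0 \<in> fX T ` hooks T'" by (rule imageI[OF dc(2)])
      then show ?thesis using imX a_def by simp
    qed
    have am: "a - m = fX T' h0" "m \<le> a" using fXT[OF dc(2)] a_def by auto
    have amA: "a - m \<notin> A"
    proof
      assume "a - m \<in> A"
      then have "a - m \<in> fX T ` hooks T'" using imX by simp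
      then obtain h where h: "h \<in> hooks T'" "fX T h = a - m" by (auto simp: image_iff)
      have "h \<noteq> h0" using h am m0 a_def by auto
      then show False using h fXT nc am by auto
    qed
    have injX': "inj_on (fX T') (hooks T')"
    proof (rule inj_onI)
      fix x y assume xy: "x \<in> hooks T'" "y \<in> hooks T'" "fX T' x = fX T' y"
      show "x = y"
      proof (cases "x = h0 \<or> y = h0")
        case True
        show ?thesis
        proof (rule ccontr)
          assume ne: "x \<noteq> y"
          show False
          proof (cases "x = h0")
            case True then show False using nc[of y] xy ne by simp
          next
            case False then show False using nc[of x] xy ne \<open>x = h0 \<or> y = h0\<close> by simp
          qed
        qed
      next
        case False
        then have "fX T x = fX T y" using xy fXT by simp
        from inj_onD[OF injX this xy(1,2)] show ?thesis .
      qed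
    qed
    have imX': "fX T' ` hooks T' = insert (a - m) (A - {a})"
    proof -
      have e: "insert h0 (hooks T' - {h0}) = hooks T'" using dc(2) by (rule insert_Diff)
      have "fX T' ` hooks T' = insert (fX T' h0) (fX T' ` (hooks T' - {h0}))"
        by (subst e[symmetric]) (simp only: image_insert)
      also have "fX T' ` (hooks T' - {h0}) = fX T ` (hooks T' - {h0})" using fXT by (auto simp: image_iff)
      also have "\<dots> = A - {a}" using inj_on_image_set_diff[OF injX, of "{h0}"] imX dc(2) a_def by auto
      finally show ?thesis using am by simp
    qed
    have imY': "fY T' ` hooks T' = B" using imY fYT by (auto simp: image_iff)
    have injY': "inj_on (fY T') (hooks T')" using injY fYT by (simp add: inj_on_def)
    have vT': "T' \<in> V a" unfolding V_def validG_def using dc(1) injX' imX' imY' injY' by simp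
    have iT: "i T = (a, T')" unfolding i_def a_def h0_def T'_def by simp
    have inI: "a \<in> I" unfolding I_def using aA am amA by simp
    have "inv_into (hooks T') (fX T') (a - m) = h0" using am(1) injX' dc(2) by (simp add: inv_into_f_f)
    then have "j (i T) = T" unfolding iT j_def using dc(3) by simp
    then show ?thesis using iT inI vT' by simp
  qed
  have bwd: "j p \<in> S \<and> i (j p) = p \<and> f (j p) = g p" if pS: "p \<in> Sigma I V" for p
  proof -
    obtain a T' where p: "p = (a, T')" by (cases p)
    have aI: "a \<in> A" "m \<le> a" "a - m \<notin> A" using pS p by (auto simp: I_def)
    have vT': "validG fX fY (insert (a - m) (A - {a})) B \<rho> T'" using pS p by (simp add: V_def)
    have T'FS: "T' \<in> FS \<rho>" and injX': "inj_on (fX T') (hooks T')"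
      and imX': "fX T' ` hooks T' = insert (a - m) (A - {a})"
      and injY': "inj_on (fY T') (hooks T')" and imY': "fY T' ` hooks T' = B"
      using vT' by (auto simp: validG_def)
    define h where "h = inv_into (hooks T') (fX T') (a - m)"
    have amI: "a - m \<in> fX T' ` hooks T'" using imX' by simp
    have h: "h \<in> hooks T'" "fX T' h = a - m" unfolding h_def using amI
      by (auto simp: inv_into_into f_inv_into_f)
    define T where "T = ext T' h (con m)"
    have jp: "j p = T" unfolding j_def p T_def h_def by simp
    have TFS: "T \<in> FS (\<rho> @ [m])" unfolding T_def using ext_FS[OF T'FS] bc n0 nh h(1) by simp
    have hT: "hooks T = hooks T'" using lin_ext(1)[OF T'FS h(1)] T_def by simp
    have fXT: "fX T g = fX T' g + (if g = h then m else 0)" if "g \<in> hooks T'" for g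
      using lin_ext(2)[OF T'FS h(1), of g gpx gvx "con m"] T_def that gx unfolding fX_def by simp
    have fYT: "fY T g = fY T' g" if "g \<in> hooks T'" for g
      using lin_ext(2)[OF T'FS h(1), of g gpy gvy "con m"] T_def that gy unfolding fY_def by simp
    have fXh: "fX T h = a" using fXT[OF h(1)] h(2) aI(2) by simp
    have oth: "fX T' ` (hooks T' - {h}) = A - {a}"
    proof -
      have "fX T' ` (hooks T' - {h}) = fX T' ` hooks T' - {a - m}"
        using inj_on_image_set_diff[OF injX', of "{h}"] h by auto
      then show ?thesis using imX' aI(3) by auto
    qed
    have imX: "fX T ` hooks T' = A"
    proof -
      have e: "insert h (hooks T' - {h}) = hooks T'" using h(1) by (rule insert_Diff)
      have "fX T ` hooks T' = insert (fX T h) (fX T ` (hooks T' - {h}))"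
        by (subst e[symmetric]) (simp only: image_insert)
      also have "fX T ` (hooks T' - {h}) = fX T' ` (hooks T' - {h})" using fXT by (auto simp: image_iff)
      finally show ?thesis using oth fXh aI(1) by auto
    qed
    have injX: "inj_on (fX T) (hooks T')"
    proof (rule inj_onI)
      fix x y assume xy: "x \<in> hooks T'" "y \<in> hooks T'" "fX T x = fX T y"
      have ne: "fX T z \<noteq> a" if "z \<in> hooks T'" "z \<noteq> h" for z
      proof -
        have "fX T z = fX T' z" using fXT that by simp
        moreover have "fX T' z \<in> fX T' ` (hooks T' - {h})" using that by simp
        ultimately show ?thesis using oth by simp
      qed
      show "x = y"
      proof (cases "x = h \<or> y = h")
        case True
        show ?thesis
        proof (rule ccontr)
          assume nxy: "x \<noteq> y"
          show False
          proof (cases "x = h")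
            case True then show False using ne[of y] xy nxy fXh by simp
          next
            case False then show False using ne[of x] xy nxy fXh \<open>x = h \<or> y = h\<close> by simp
          qed
        qed
      next
        case False
        then have "fX T' x = fX T' y" using xy fXT by simp
        from inj_onD[OF injX' this xy(1,2)] show ?thesis .
      qed
    qed
    have imY: "fY T ` hooks T' = B" using imY' fYT by (auto simp: image_iff)
    have injY: "inj_on (fY T) (hooks T')" using injY' fYT by (simp add: inj_on_def)
    have tT: "trunc T = T'" "last (fst T) = h" "last (snd T) = con m" unfolding T_def
      by (auto simp: ext_def trunc_def)
    have ncl: "\<not> coll T" unfolding coll_def tT using injX' h(1) by (auto dest: inj_onD)
    have TS: "T \<in> S" unfolding S_def validG_def using TFS hT imX injX imY injY tT ncl by simp
    have ij: "i T = (a, T')" unfolding i_def tT fXh by simp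
    have sgnrel: "sD fX fY T' = sD fX fY T * (-1) ^ c a"
    proof -
      have "sgn (D (hooks T') (FF (\<lambda>g. int (fX T' g)) (\<lambda>g. int (fY T' g)))) =
        sgn (D (hooks T') (FF (\<lambda>g. int (fX T g)) (\<lambda>g. int (fY T g)))) *
        (-1) ^ card {g\<in>hooks T' - {h}. int (fX T' h) < int (fX T g) \<and> int (fX T g) < int (fX T h)}"
      proof (rule D_update)
        show "\<forall>g\<in>hooks T' - {h}. int (fX T' g) = int (fX T g)" using fXT by simp
        show "\<forall>g\<in>hooks T'. int (fY T' g) = int (fY T g)" using fYT by simp
        show "\<forall>g\<in>hooks T' - {h}. int (fX T g) \<noteq> int (fX T h) \<and> int (fX T g) \<noteq> int (fX T' h)"
        proof
          fix z assume z: "z \<in> hooks T' - {h}"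
          have "fX T z = fX T' z" using fXT z by simp
          moreover have "fX T' z \<in> A - {a}"
          proof -
            have "fX T' z \<in> fX T' ` (hooks T' - {h})" using z by simp
            then show ?thesis using oth by simp
          qed
          ultimately show "int (fX T z) \<noteq> int (fX T h) \<and> int (fX T z) \<noteq> int (fX T' h)"
            using fXh h(2) aI(3) by auto
        qed
        show "int (fX T' h) \<le> int (fX T h)" using fXh h(2) by simp
      qed (use h(1) in auto)
      moreover have "card {g\<in>hooks T' - {h}. int (fX T' h) < int (fX T g) \<and> int (fX T g) < int (fX T h)} = c a"
      proof -
        have "{g\<in>hooks T' - {h}. int (fX T' h) < int (fX T g) \<and> int (fX T g) < int (fX T h)} =
            {g\<in>hooks T' - {h}. a - m < fX T g \<and> fX T g < a}"
          using fXh h(2) aI(2) by auto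
        moreover have "fX T ` {g\<in>hooks T' - {h}. a - m < fX T g \<and> fX T g < a} = {x\<in>A. a - m < x \<and> x < a}"
        proof -
          have "fX T ` (hooks T' - {h}) = A - {a}" using oth fXT by (auto simp: image_iff)
          then show ?thesis by auto
        qed
        moreover have "inj_on (fX T) {g\<in>hooks T' - {h}. a - m < fX T g \<and> fX T g < a}"
          using injX by (rule inj_on_subset) auto
        ultimately show ?thesis unfolding c_def by (simp add: card_image[symmetric])
      qed
      ultimately show ?thesis unfolding sD_def hT by simp
    qed
    have fj: "f T = g p"
    proof -
      have e: "eps T = \<kappa> * eps T'" unfolding T_def by (rule eps[OF T'FS h(1)])
      have "sD fX fY T = sD fX fY T' * (-1) ^ c a"
        using sgnrel by (simp add: mult.assoc power_mult_distrib[symmetric])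
      then show ?thesis unfolding f_def g_def p e by (simp add: ac_simps)
    qed
    show ?thesis using TS ij fj jp p by simp
  qed
  have "(\<Sum>a\<in>I. \<kappa> * (-1) ^ c a * (\<Sum>T'\<in>V a. f T')) = (\<Sum>a\<in>I. \<Sum>T'\<in>V a. g (a, T'))"
    unfolding g_def by (simp add: sum_distrib_left)
  also have "\<dots> = (\<Sum>p\<in>Sigma I V. g p)"
  proof -
    have "finite I" using finA by (simp add: I_def)
    moreover have "\<forall>a\<in>I. finite (V a)"
      by (auto simp: V_def validG_def intro: finite_subset[OF _ finite_FS[of \<rho>]])
    ultimately show ?thesis using sum.Sigma[of I V "\<lambda>a T'. g (a, T')"] by simp
  qed
  also have "\<dots> = (\<Sum>T\<in>S. f T)"
    by (rule sum.reindex_bij_witness[of "Sigma I V" i j]) (use fwd bwd in auto)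
  finally show ?thesis unfolding f_def S_def coll_def fX_def fY_def I_def V_def c_def by simp
qed

definition W :: "nat set \<Rightarrow> nat set \<Rightarrow> nat list \<Rightarrow> int" where
  "W A B \<rho> = (\<Sum>T\<in>{T. validG fillP fillQ A B \<rho> T}. sgnT T)"

definition eps :: "fstruct \<Rightarrow> int" where
  "eps T = (-1) ^ ((\<Sum>h\<in>hooks T. fillQ T h) + n_vertical T)"

lemma sgnT_sD: "sgnT T = sD fillP fillQ T * eps T"
  unfolding sgnT_D sD_def eps_def ..

lemma finite_valid: "finite {T. validG fX fY A B \<rho> T}"
  by (rule finite_subset[OF _ finite_FS[of \<rho>]]) (auto simp: validG_def)

lemma hook_sum:
  assumes m0: "0 < m"
  shows "(\<Sum>T\<in>{T. validG fillP fillQ A B (\<rho> @ [m]) T \<and> is_hook (last (snd T))}. sgnT T) =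
    (\<Sum>a\<in>{a\<in>A. a < m \<and> m - 1 - a \<in> B}.
       (-1) ^ (card {x\<in>A. x < a} + card {y\<in>B. y < m - 1 - a} + (m - 1 - a)) * W (A - {a}) (B - {m - 1 - a}) \<rho>)"
proof -
  define k where "k = length \<rho>"
  define S where "S = {T. validG fillP fillQ A B (\<rho> @ [m]) T \<and> is_hook (last (snd T))}"
  define I where "I = {a\<in>A. a < m \<and> m - 1 - a \<in> B}"
  define V where "V a = {T'. validG fillP fillQ (A - {a}) (B - {m - 1 - a}) \<rho> T'}" for a
  define c where "c a = card {x\<in>A. x < a} + card {y\<in>B. y < m - 1 - a} + (m - 1 - a)" for a
  define g where "g p = (-1) ^ c (fst p) * sgnT (snd p)" for p
  define i where "i T = (hook_p (last (snd T)), trunc T)" for T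
  define j where "j p = ext (snd p) k (Hook (fst p) (m - 1 - fst p))" for p
  have common: "T \<in> FS (\<rho> @ [m]) \<and> hooks T = insert k (hooks T') \<and> k \<notin> hooks T' \<and>
      (\<forall>g\<in>hooks T'. fillP T g = fillP T' g \<and> fillQ T g = fillQ T' g) \<and>
      fillP T k = a \<and> fillQ T k = m - 1 - a \<and> n_vertical T = n_vertical T'"
    if T': "T' \<in> FS \<rho>" and am: "a < m" and T: "T = ext T' k (Hook a (m - 1 - a))" for T T' a
  proof -
    have "T \<in> FS (\<rho> @ [m])" unfolding T using ext_FS[OF T'] am k_def by simp
    moreover have "hooks T = insert k (hooks T')" unfolding T using hooks_ext[OF T'] k_def by simp
    moreover have kn: "k \<notin> hooks T'" using hooks_sub[of T'] FS_lens[OF T'] k_def by auto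
    moreover have "\<forall>g\<in>hooks T'. fillP T g = fillP T' g \<and> fillQ T g = fillQ T' g"
    proof
      fix g assume "g \<in> hooks T'"
      then have "g < k" "g \<noteq> k" using hooks_sub[of T'] FS_lens[OF T'] k_def by auto
      then show "fillP T g = fillP T' g \<and> fillQ T g = fillQ T' g"
        unfolding T fillP_G fillQ_G using fillG_ext[OF T'] k_def by simp
    qed
    moreover have "fillP T k = a \<and> fillQ T k = m - 1 - a"
      unfolding T fillP_G fillQ_G using fillG_ext_new[OF T'] k_def by simp
    moreover have "n_vertical T = n_vertical T'" unfolding T using nv_ext[OF T'] by simp
    ultimately show ?thesis by blast
  qed
  have fwd: "i T \<in> Sigma I V \<and> j (i T) = T" if TS: "T \<in> S" for T
  proof -
    define T' where "T' = trunc T"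
    have v: "validG fillP fillQ A B (\<rho> @ [m]) T" and hk: "is_hook (last (snd T))" using TS by (auto simp: S_def)
    have TFS: "T \<in> FS (\<rho> @ [m])" using v by (simp add: validG_def)
    have sn: "T' \<in> FS \<rho>" "T = ext T' (last (fst T)) (last (snd T))" using FS_snoc[OF TFS] T'_def by auto
    obtain a q where b: "last (snd T) = Hook a q" using hk by (cases "last (snd T)") auto
    have cond: "bcard (Hook a q) = m \<and> last (fst T) = k"
      using ext_FS[OF sn(1)] sn(2) TFS b k_def by (metis is_hook.simps(1))
    then have q: "q = m - 1 - a" "a < m" by auto
    have Te: "T = ext T' k (Hook a (m - 1 - a))" using sn(2) b cond q by simp
    note cm = common[OF sn(1) q(2) Te]
    have injP: "inj_on (fillP T) (hooks T)" and imP: "fillP T ` hooks T = A"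
      and injQ: "inj_on (fillQ T) (hooks T)" and imQ: "fillQ T ` hooks T = B"
      using v by (auto simp: validG_def)
    have aA: "a \<in> A" using imP cm by (metis image_insert insertI1)
    have qB: "m - 1 - a \<in> B" using imQ cm by (metis image_insert insertI1)
    have injP': "inj_on (fillP T') (hooks T')"
    proof -
      have "inj_on (fillP T) (hooks T')" using injP cm by (simp add: inj_on_insert)
      then show ?thesis using cm by (simp add: inj_on_def)
    qed
    have injQ': "inj_on (fillQ T') (hooks T')"
    proof -
      have "inj_on (fillQ T) (hooks T')" using injQ cm by (simp add: inj_on_insert)
      then show ?thesis using cm by (simp add: inj_on_def)
    qed
    have imP': "fillP T' ` hooks T' = A - {a}"
    proof -
      have "fillP T' ` hooks T' = fillP T ` hooks T'" using cm by (auto simp: image_iff)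
      also have "\<dots> = fillP T ` (hooks T - {k})" using cm by simp
      also have "\<dots> = fillP T ` hooks T - fillP T ` {k}"
        by (rule inj_on_image_set_diff[OF injP]) (use cm in auto)
      also have "\<dots> = A - {a}" using imP cm by simp
      finally show ?thesis .
    qed
    have imQ': "fillQ T' ` hooks T' = B - {m - 1 - a}"
    proof -
      have "fillQ T' ` hooks T' = fillQ T ` hooks T'" using cm by (auto simp: image_iff)
      also have "\<dots> = fillQ T ` (hooks T - {k})" using cm by simp
      also have "\<dots> = fillQ T ` hooks T - fillQ T ` {k}"
        by (rule inj_on_image_set_diff[OF injQ]) (use cm in auto)
      also have "\<dots> = B - {m - 1 - a}" using imQ cm by simp
      finally show ?thesis .
    qed
    have iT: "i T = (a, T')" unfolding i_def T'_def b by simp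
    have "T' \<in> V a" unfolding V_def validG_def using sn(1) injP' imP' injQ' imQ' by simp
    moreover have "a \<in> I" unfolding I_def using aA q qB by simp
    moreover have "j (i T) = T" unfolding iT j_def using Te by simp
    ultimately show ?thesis using iT by simp
  qed
  have bwd: "j p \<in> S \<and> i (j p) = p \<and> sgnT (j p) = g p" if pS: "p \<in> Sigma I V" for p
  proof -
    obtain a T' where p: "p = (a, T')" by (cases p)
    have aI: "a \<in> A" "a < m" "m - 1 - a \<in> B" using pS p by (auto simp: I_def)
    have v': "validG fillP fillQ (A - {a}) (B - {m - 1 - a}) \<rho> T'" using pS p by (simp add: V_def)
    have T'FS: "T' \<in> FS \<rho>" and injP': "inj_on (fillP T') (hooks T')" and imP': "fillP T' ` hooks T' = A - {a}"
      and injQ': "inj_on (fillQ T') (hooks T')" and imQ': "fillQ T' ` hooks T' = B - {m - 1 - a}"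
      using v' by (auto simp: validG_def)
    define T where "T = ext T' k (Hook a (m - 1 - a))"
    note cm = common[OF T'FS aI(2) T_def]
    have imPs: "fillP T ` hooks T' = A - {a}" using imP' cm by (auto simp: image_iff)
    have imQs: "fillQ T ` hooks T' = B - {m - 1 - a}" using imQ' cm by (auto simp: image_iff)
    have imP: "fillP T ` hooks T = A" using imPs cm aI by auto
    have imQ: "fillQ T ` hooks T = B" using imQs cm aI by auto
    have injP: "inj_on (fillP T) (hooks T)"
    proof -
      have "inj_on (fillP T) (hooks T')" using injP' cm by (simp add: inj_on_def)
      moreover have "fillP T k \<notin> fillP T ` hooks T'" using imPs cm by simp
      ultimately show ?thesis using cm by simp
    qed
    have injQ: "inj_on (fillQ T) (hooks T)"
    proof -
      have "inj_on (fillQ T) (hooks T')" using injQ' cm by (simp add: inj_on_def)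
      moreover have "fillQ T k \<notin> fillQ T ` hooks T'" using imQs cm by simp
      ultimately show ?thesis using cm by simp
    qed
    have lT: "last (snd T) = Hook a (m - 1 - a)" "trunc T = T'" unfolding T_def by (auto simp: ext_def trunc_def)
    have TS: "T \<in> S" unfolding S_def validG_def using cm imP imQ injP injQ lT by simp
    have ij: "i T = (a, T')" unfolding i_def lT by simp
    have sg: "sgnT T = (-1) ^ c a * sgnT T'"
    proof -
      define X where "X h = int (fillP T h)" for h
      define Y where "Y h = int (fillQ T h)" for h
      have kH: "\<forall>h\<in>hooks T'. h < k" using hooks_sub[of T'] FS_lens[OF T'FS] k_def by auto
      have xa: "\<forall>h\<in>hooks T'. X h \<noteq> X k"
        using imPs cm unfolding X_def by (auto simp: image_iff)
      have yb: "\<forall>h\<in>hooks T'. Y h \<noteq> Y k"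
        using imQs cm unfolding Y_def by (auto simp: image_iff)
      have dh: "sgn (D (insert k (hooks T')) (FF X Y)) = sgn (D (hooks T') (FF X Y)) *
          (-1) ^ (card {h\<in>hooks T'. X h < X k} + card {h\<in>hooks T'. Y h < Y k})"
        by (rule D_hook[OF _ kH xa yb]) simp
      have dc: "D (hooks T') (FF X Y) = D (hooks T') (FF (\<lambda>h. int (fillP T' h)) (\<lambda>h. int (fillQ T' h)))"
        by (rule D_cong) (use cm in \<open>simp add: FF_def X_def Y_def\<close>)
      have c1: "card {h\<in>hooks T'. X h < X k} = card {x\<in>A. x < a}"
      proof -
        have "fillP T' ` {h\<in>hooks T'. fillP T' h < a} = {x\<in>A - {a}. x < a}" using imP' by auto
        moreover have "inj_on (fillP T') {h\<in>hooks T'. fillP T' h < a}" using injP' by (rule inj_on_subset) auto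
        moreover have "{h\<in>hooks T'. X h < X k} = {h\<in>hooks T'. fillP T' h < a}" using cm X_def by auto
        moreover have "{x\<in>A - {a}. x < a} = {x\<in>A. x < a}" by auto
        ultimately show ?thesis by (simp add: card_image[symmetric])
      qed
      have c2: "card {h\<in>hooks T'. Y h < Y k} = card {y\<in>B. y < m - 1 - a}"
      proof -
        have "fillQ T' ` {h\<in>hooks T'. fillQ T' h < m - 1 - a} = {x\<in>B - {m - 1 - a}. x < m - 1 - a}" using imQ' by auto
        moreover have "inj_on (fillQ T') {h\<in>hooks T'. fillQ T' h < m - 1 - a}" using injQ' by (rule inj_on_subset) auto
        moreover have "{h\<in>hooks T'. Y h < Y k} = {h\<in>hooks T'. fillQ T' h < m - 1 - a}" using cm Y_def by auto
        moreover have "{x\<in>B - {m - 1 - a}. x < m - 1 - a} = {y\<in>B. y < m - 1 - a}" by auto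
        ultimately show ?thesis by (simp add: card_image[symmetric])
      qed
      have sq: "(\<Sum>h\<in>hooks T. fillQ T h) = (m - 1 - a) + (\<Sum>h\<in>hooks T'. fillQ T' h)"
        using cm by simp
      show ?thesis
        unfolding sgnT_D sq
        using cm dh dc c1 c2 unfolding c_def X_def Y_def
        by (simp add: power_add ac_simps)
    qed
    have "j p = T" unfolding j_def p T_def by simp
    then show ?thesis using TS ij sg p unfolding g_def by simp
  qed
  have "(\<Sum>a\<in>I. (-1) ^ c a * W (A - {a}) (B - {m - 1 - a}) \<rho>) = (\<Sum>a\<in>I. \<Sum>T'\<in>V a. g (a, T'))"
    unfolding g_def W_def V_def by (simp add: sum_distrib_left)
  also have "\<dots> = (\<Sum>p\<in>Sigma I V. g p)"
  proof -
    have "finite I" unfolding I_def using finite_subset[of "{a\<in>A. a < m \<and> m - 1 - a \<in> B}" "{..<m}"] by auto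
    moreover have "\<forall>a\<in>I. finite (V a)" unfolding V_def using finite_valid by auto
    ultimately show ?thesis using sum.Sigma[of I V "\<lambda>a T'. g (a, T')"] by simp
  qed
  also have "\<dots> = (\<Sum>T\<in>S. sgnT T)"
    by (rule sum.reindex_bij_witness[of "Sigma I V" i j]) (use fwd bwd in auto)
  finally show ?thesis unfolding S_def I_def c_def by simp
qed

lemma validG_swap: "validG fX fY A B \<rho> T = validG fY fX B A \<rho> T"
  unfolding validG_def by auto

lemma eps_hor:
  assumes T': "T' \<in> FS \<rho>" and h: "h \<in> hooks T'"
  shows "eps (ext T' h (Hor m)) = 1 * eps T'"
proof -
  have hk: "hooks (ext T' h (Hor m)) = hooks T'" by (rule lin_ext(1)[OF T' h])
  have q: "fillQ (ext T' h (Hor m)) g = fillQ T' g" if "g \<in> hooks T'" for g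
    using lin_ext(2)[OF T' h that, of hook_q ver_val "Hor m"] unfolding fillQ_G by simp
  show ?thesis unfolding eps_def hk nv_ext[OF T'] using q by simp
qed

lemma eps_ver:
  assumes T': "T' \<in> FS \<rho>" and h: "h \<in> hooks T'"
  shows "eps (ext T' h (Ver m)) = (-1) ^ (m + 1) * eps T'"
proof -
  have hk: "hooks (ext T' h (Ver m)) = hooks T'" by (rule lin_ext(1)[OF T' h])
  have q: "fillQ (ext T' h (Ver m)) g = fillQ T' g + (if g = h then m else 0)" if "g \<in> hooks T'" for g
    using lin_ext(2)[OF T' h that, of hook_q ver_val "Ver m"] unfolding fillQ_G by simp
  have s: "(\<Sum>g\<in>hooks T'. fillQ (ext T' h (Ver m)) g) = (\<Sum>g\<in>hooks T'. fillQ T' g) + m"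
    using q h by (simp add: sum.distrib)
  show ?thesis unfolding eps_def hk nv_ext[OF T'] s by (simp add: power_add)
qed

lemma sum_split3:
  assumes "finite S" "\<And>x. x \<in> S \<Longrightarrow> (P1 x \<or> P2 x \<or> P3 x)"
    "\<And>x. x \<in> S \<Longrightarrow> \<not> (P1 x \<and> P2 x)" "\<And>x. x \<in> S \<Longrightarrow> \<not> (P1 x \<and> P3 x)" "\<And>x. x \<in> S \<Longrightarrow> \<not> (P2 x \<and> P3 x)"
  shows "sum f S = sum f {x\<in>S. P1 x} + sum f {x\<in>S. P2 x} + sum f {x\<in>S. P3 x}"
proof -
  have "sum f S = (\<Sum>x\<in>S. (if P1 x then f x else 0) + (if P2 x then f x else 0) + (if P3 x then f x else 0))"
    by (rule sum.cong[OF refl]) (use assms in auto)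
  also have "\<dots> = sum f {x\<in>S. P1 x} + sum f {x\<in>S. P2 x} + sum f {x\<in>S. P3 x}"
    using assms(1) by (simp add: sum.distrib sum.inter_filter)
  finally show ?thesis .
qed

lemma sum_split2:
  assumes "finite S"
  shows "sum f S = sum f {x\<in>S. P x} + sum f {x\<in>S. \<not> P x}"
proof -
  have "sum f S = (\<Sum>x\<in>S. (if P x then f x else 0) + (if \<not> P x then f x else 0))"
    by (rule sum.cong[OF refl]) auto
  also have "\<dots> = sum f {x\<in>S. P x} + sum f {x\<in>S. \<not> P x}"
    using assms by (simp add: sum.distrib sum.inter_filter)
  finally show ?thesis .
qed

theorem W_snoc:
  assumes m0: "0 < m" and finA: "finite A" and finB: "finite B"
  shows "W A B (\<rho> @ [m]) =
    (\<Sum>a\<in>{a\<in>A. m \<le> a \<and> a - m \<notin> A}. (-1) ^ card {x\<in>A. a - m < x \<and> x < a} * W (insert (a - m) (A - {a})) B \<rho>)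
  + (\<Sum>b\<in>{b\<in>B. m \<le> b \<and> b - m \<notin> B}. (-1) ^ (m + 1 + card {y\<in>B. b - m < y \<and> y < b}) * W A (insert (b - m) (B - {b})) \<rho>)
  + (\<Sum>a\<in>{a\<in>A. a < m \<and> m - 1 - a \<in> B}.
       (-1) ^ (card {x\<in>A. x < a} + card {y\<in>B. y < m - 1 - a} + (m - 1 - a)) * W (A - {a}) (B - {m - 1 - a}) \<rho>)"
proof -
  define S where "S = {T. validG fillP fillQ A B (\<rho> @ [m]) T}"
  have finS: "finite S" unfolding S_def by (rule finite_valid)
  have lb: "is_hook (last (snd T)) \<or> last (snd T) = Hor m \<or> last (snd T) = Ver m" if "T \<in> S" for T
  proof -
    have TFS: "T \<in> FS (\<rho> @ [m])" using that by (simp add: S_def validG_def)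
    have l: "length (snd T) = Suc (length \<rho>)" using FS_lens[OF TFS] by simp
    have "bcard (snd T ! length \<rho>) = (\<rho> @ [m]) ! length \<rho>" using FS_prop[OF TFS, of "length \<rho>"] by simp
    moreover have "last (snd T) = snd T ! length \<rho>"
    proof -
      have "snd T \<noteq> []" using l by auto
      then show ?thesis using l by (simp add: last_conv_nth)
    qed
    ultimately have "bcard (last (snd T)) = m" by simp
    then show ?thesis by (cases "last (snd T)") auto
  qed
  have split: "W A B (\<rho> @ [m]) = (\<Sum>T\<in>{T\<in>S. last (snd T) = Hor m}. sgnT T) +
      (\<Sum>T\<in>{T\<in>S. last (snd T) = Ver m}. sgnT T) + (\<Sum>T\<in>{T\<in>S. is_hook (last (snd T))}. sgnT T)"
    unfolding W_def S_def[symmetric]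
    by (rule sum_split3[OF finS]) (use lb in auto)
  have hookp: "(\<Sum>T\<in>{T\<in>S. is_hook (last (snd T))}. sgnT T) =
    (\<Sum>a\<in>{a\<in>A. a < m \<and> m - 1 - a \<in> B}.
       (-1) ^ (card {x\<in>A. x < a} + card {y\<in>B. y < m - 1 - a} + (m - 1 - a)) * W (A - {a}) (B - {m - 1 - a}) \<rho>)"
    using hook_sum[OF m0, of A B \<rho>] unfolding S_def by simp
  define collP where "collP T \<longleftrightarrow> (\<exists>h1\<in>hooks (trunc T). h1 \<noteq> last (fst T) \<and>
      fillG hook_p hor_val (trunc T) h1 = fillG hook_p hor_val (trunc T) (last (fst T)))" for T
  define collQ where "collQ T \<longleftrightarrow> (\<exists>h1\<in>hooks (trunc T). h1 \<noteq> last (fst T) \<and>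
      fillG hook_q ver_val (trunc T) h1 = fillG hook_q ver_val (trunc T) (last (fst T)))" for T
  have horp: "(\<Sum>T\<in>{T\<in>S. last (snd T) = Hor m}. sgnT T) =
    (\<Sum>a\<in>{a\<in>A. m \<le> a \<and> a - m \<notin> A}. (-1) ^ card {x\<in>A. a - m < x \<and> x < a} * W (insert (a - m) (A - {a})) B \<rho>)"
  proof -
    have fin: "finite {T\<in>S. last (snd T) = Hor m}" using finS by simp
    have "(\<Sum>T\<in>{T\<in>S. last (snd T) = Hor m}. sgnT T) =
        (\<Sum>T\<in>{T\<in>{T\<in>S. last (snd T) = Hor m}. collP T}. sgnT T) + (\<Sum>T\<in>{T\<in>{T\<in>S. last (snd T) = Hor m}. \<not> collP T}. sgnT T)"
      by (rule sum_split2[OF fin])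
    also have "(\<Sum>T\<in>{T\<in>{T\<in>S. last (snd T) = Hor m}. collP T}. sgnT T) = 0"
      using coll_zero[of hor_val Hor m ver_val \<rho> eps 1 hook_p hook_q A B] m0 eps_hor
      unfolding S_def collP_def sgnT_sD fillP_G fillQ_G by (simp add: conj_assoc)
    also have "(\<Sum>T\<in>{T\<in>{T\<in>S. last (snd T) = Hor m}. \<not> collP T}. sgnT T) =
        (\<Sum>a\<in>{a\<in>A. m \<le> a \<and> a - m \<notin> A}. 1 * (-1) ^ card {x\<in>A. a - m < x \<and> x < a} *
          (\<Sum>T'\<in>{T'. validG fillP fillQ (insert (a - m) (A - {a})) B \<rho> T'}. sD fillP fillQ T' * eps T'))"
      using noncoll_sum[of hor_val Hor m ver_val \<rho> eps 1 A hook_p hook_q B] m0 eps_hor finA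
      unfolding S_def collP_def sgnT_sD fillP_G fillQ_G by (simp add: conj_assoc)
    finally show ?thesis unfolding W_def sgnT_sD by simp
  qed
  have verp: "(\<Sum>T\<in>{T\<in>S. last (snd T) = Ver m}. sgnT T) =
    (\<Sum>b\<in>{b\<in>B. m \<le> b \<and> b - m \<notin> B}. (-1) ^ (m + 1 + card {y\<in>B. b - m < y \<and> y < b}) * W A (insert (b - m) (B - {b})) \<rho>)"
  proof -
    have S': "S = {T. validG fillQ fillP B A (\<rho> @ [m]) T}" unfolding S_def by (simp add: validG_swap)
    have sg: "sgnT T = sD fillQ fillP T * eps T" for T by (simp add: sgnT_sD sD_comm)
    have fin: "finite {T\<in>S. last (snd T) = Ver m}" using finS by simp
    have "(\<Sum>T\<in>{T\<in>S. last (snd T) = Ver m}. sgnT T) =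
        (\<Sum>T\<in>{T\<in>{T\<in>S. last (snd T) = Ver m}. collQ T}. sgnT T) + (\<Sum>T\<in>{T\<in>{T\<in>S. last (snd T) = Ver m}. \<not> collQ T}. sgnT T)"
      by (rule sum_split2[OF fin])
    also have "(\<Sum>T\<in>{T\<in>{T\<in>S. last (snd T) = Ver m}. collQ T}. sgnT T) = 0"
      using coll_zero[of ver_val Ver m hor_val \<rho> eps "(-1) ^ (m + 1)" hook_q hook_p B A] m0 eps_ver
      unfolding S' collQ_def sg fillP_G fillQ_G by (simp add: conj_assoc)
    also have "(\<Sum>T\<in>{T\<in>{T\<in>S. last (snd T) = Ver m}. \<not> collQ T}. sgnT T) =
        (\<Sum>b\<in>{b\<in>B. m \<le> b \<and> b - m \<notin> B}. (-1) ^ (m + 1) * (-1) ^ card {y\<in>B. b - m < y \<and> y < b} *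
          (\<Sum>T'\<in>{T'. validG fillQ fillP (insert (b - m) (B - {b})) A \<rho> T'}. sD fillQ fillP T' * eps T'))"
      using noncoll_sum[of ver_val Ver m hor_val \<rho> eps "(-1) ^ (m + 1)" B hook_q hook_p A] m0 eps_ver finB
      unfolding S' collQ_def sg fillP_G fillQ_G by (simp add: conj_assoc)
    also have "\<dots> = (\<Sum>b\<in>{b\<in>B. m \<le> b \<and> b - m \<notin> B}. (-1) ^ (m + 1 + card {y\<in>B. b - m < y \<and> y < b}) *
          W A (insert (b - m) (B - {b})) \<rho>)"
      unfolding W_def sg by (simp add: validG_swap[of fillQ fillP] power_add)
    finally show ?thesis by simp
  qed
  show ?thesis using split hookp horp verp by simp
qed

definition Aset :: "nat \<Rightarrow> nat set \<Rightarrow> nat set" where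
  "Aset l C = (\<lambda>c. c - l) ` {c\<in>C. l \<le> c}"

definition Bset :: "nat \<Rightarrow> nat set \<Rightarrow> nat set" where
  "Bset l C = (\<lambda>c. l - 1 - c) ` ({0..<l} - C)"

lemma Aset_iff: "x \<in> Aset l C \<longleftrightarrow> x + l \<in> C"
proof
  assume "x \<in> Aset l C"
  then obtain c where "c \<in> C" "l \<le> c" "x = c - l" unfolding Aset_def by auto
  then show "x + l \<in> C" by simp
next
  assume "x + l \<in> C"
  then have "x + l \<in> {c\<in>C. l \<le> c}" by simp
  then have "(x + l) - l \<in> Aset l C" unfolding Aset_def by (rule imageI)
  then show "x \<in> Aset l C" by simp
qed

lemma Bset_iff: "y \<in> Bset l C \<longleftrightarrow> y < l \<and> l - 1 - y \<notin> C"
proof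
  assume "y \<in> Bset l C"
  then obtain c where "c < l" "c \<notin> C" "y = l - 1 - c" unfolding Bset_def by auto
  then show "y < l \<and> l - 1 - y \<notin> C" by (simp add: Suc_diff_Suc)
next
  assume a: "y < l \<and> l - 1 - y \<notin> C"
  then have "l - 1 - y \<in> {0..<l} - C" by auto
  then have "l - 1 - (l - 1 - y) \<in> Bset l C" unfolding Bset_def by (rule imageI)
  then show "y \<in> Bset l C" using a by simp
qed

lemma finite_Aset: "finite C \<Longrightarrow> finite (Aset l C)"
  unfolding Aset_def by simp

lemma finite_Bset: "finite (Bset l C)"
  unfolding Bset_def by simp

lemma pm1_diff: "b \<le> a \<Longrightarrow> (-1::int) ^ (a - b) = (-1) ^ (a + b)"
proof -
  assume "b \<le> a"
  then obtain d where d: "a = b + d" using le_Suc_ex by blast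
  have e: "a + b = d + 2 * b" using d by simp
  have "(-1::int) ^ (a + b) = (-1) ^ d * ((-1) ^ 2) ^ b" unfolding e power_add power_mult ..
  then show ?thesis using d by simp
qed

lemma part1:
  assumes finC: "finite C" and m0: "0 < m"
  shows "(\<Sum>c\<in>{c\<in>C. (m \<le> c \<and> c - m \<notin> C) \<and> l + m \<le> c}.
      (-1) ^ card {y\<in>C. c - m < y \<and> y < c} *
      W (Aset l (insert (c - m) (C - {c}))) (Bset l (insert (c - m) (C - {c}))) R) =
    (\<Sum>a\<in>{a\<in>Aset l C. m \<le> a \<and> a - m \<notin> Aset l C}.
      (-1) ^ card {x\<in>Aset l C. a - m < x \<and> x < a} * W (insert (a - m) (Aset l C - {a})) (Bset l C) R)"
proof -
  define SC where "SC = {c\<in>C. (m \<le> c \<and> c - m \<notin> C) \<and> l + m \<le> c}"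
  define SA where "SA = {a\<in>Aset l C. m \<le> a \<and> a - m \<notin> Aset l C}"
  have f2: "a + l \<in> SC" if "a \<in> SA" for a
  proof -
    have a: "a + l \<in> C" "m \<le> a" "a - m + l \<notin> C" using that by (auto simp: Aset_iff SA_def)
    have "a + l - m = a - m + l" using a(2) by simp
    then show ?thesis using a by (auto simp: SC_def)
  qed
  have f1: "c - l \<in> SA \<and> c - l + l = c" if "c \<in> SC" for c
  proof -
    have c: "c \<in> C" "m \<le> c" "c - m \<notin> C" "l + m \<le> c" using that by (auto simp: SC_def)
    have "c - l - m + l = c - m" using c by simp
    then show ?thesis using c by (auto simp: Aset_iff SA_def)
  qed
  have f5: "(-1) ^ card {x\<in>Aset l C. (c - l) - m < x \<and> x < c - l} * W (insert ((c - l) - m) (Aset l C - {c - l})) (Bset l C) R =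
    (-1) ^ card {y\<in>C. c - m < y \<and> y < c} * W (Aset l (insert (c - m) (C - {c}))) (Bset l (insert (c - m) (C - {c}))) R"
    if "c \<in> SC" for c
  proof -
    have c: "c \<in> C" "m \<le> c" "c - m \<notin> C" "l + m \<le> c" using that by (auto simp: SC_def)
    define a where "a = c - l"
    have ca: "c = a + l" using c a_def by simp
    have am: "m \<le> a" using c a_def by simp
    have card: "card {y\<in>C. c - m < y \<and> y < c} = card {x\<in>Aset l C. a - m < x \<and> x < a}"
    proof -
      have "{x\<in>Aset l C. a - m < x \<and> x < a} = (\<lambda>y. y - l) ` {y\<in>C. c - m < y \<and> y < c}"
      proof (rule set_eqI)
        fix x
        show "x \<in> {x\<in>Aset l C. a - m < x \<and> x < a} \<longleftrightarrow> x \<in> (\<lambda>y. y - l) ` {y\<in>C. c - m < y \<and> y < c}"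
        proof
          assume "x \<in> {x\<in>Aset l C. a - m < x \<and> x < a}"
          then have "x + l \<in> {y\<in>C. c - m < y \<and> y < c}" "x = x + l - l" using ca am by (auto simp: Aset_iff)
          then show "x \<in> (\<lambda>y. y - l) ` {y\<in>C. c - m < y \<and> y < c}" by (rule rev_image_eqI)
        next
          assume "x \<in> (\<lambda>y. y - l) ` {y\<in>C. c - m < y \<and> y < c}"
          then obtain y where "y \<in> C" "c - m < y" "y < c" "x = y - l" by auto
          then show "x \<in> {x\<in>Aset l C. a - m < x \<and> x < a}" using ca am by (auto simp: Aset_iff)
        qed
      qed
      moreover have "inj_on (\<lambda>y. y - l) {y\<in>C. c - m < y \<and> y < c}"
        using c by (auto simp: inj_on_def)
      ultimately show ?thesis by (simp add: card_image)
    qed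
    have AA: "Aset l (insert (c - m) (C - {c})) = insert (a - m) (Aset l C - {a})"
      using ca am by (auto simp: Aset_iff)
    have BB: "Bset l (insert (c - m) (C - {c})) = Bset l C"
      using c by (auto simp: Bset_iff)
    show ?thesis unfolding AA BB card a_def by simp
  qed
  show ?thesis unfolding SC_def[symmetric] SA_def[symmetric]
    by (rule sum.reindex_bij_witness[of SC "\<lambda>a. a + l" "\<lambda>c. c - l"]) (use f1 f2 f5 in auto)
qed

lemma part2:
  assumes finC: "finite C" and m0: "0 < m"
  shows "(\<Sum>c\<in>{c\<in>C. (m \<le> c \<and> c - m \<notin> C) \<and> c < l}.
      (-1) ^ card {y\<in>C. c - m < y \<and> y < c} *
      W (Aset l (insert (c - m) (C - {c}))) (Bset l (insert (c - m) (C - {c}))) R) =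
    (\<Sum>b\<in>{b\<in>Bset l C. m \<le> b \<and> b - m \<notin> Bset l C}.
      (-1) ^ (m + 1 + card {y\<in>Bset l C. b - m < y \<and> y < b}) * W (Aset l C) (insert (b - m) (Bset l C - {b})) R)"
proof -
  define SC where "SC = {c\<in>C. (m \<le> c \<and> c - m \<notin> C) \<and> c < l}"
  define SB where "SB = {b\<in>Bset l C. m \<le> b \<and> b - m \<notin> Bset l C}"
  have f2: "l - 1 - b + m \<in> SC \<and> l - 1 - (l - 1 - b + m - m) = b" if "b \<in> SB" for b
  proof -
    have b: "b < l" "l - 1 - b \<notin> C" "m \<le> b" "\<not> (b - m < l \<and> l - 1 - (b - m) \<notin> C)"
      using that by (auto simp: Bset_iff SB_def)
    have "l - 1 - (b - m) \<in> C" using b by auto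
    moreover have "l - 1 - (b - m) = l - 1 - b + m" using b by simp
    ultimately show ?thesis using b by (auto simp: SC_def)
  qed
  have f1: "l - 1 - (c - m) \<in> SB \<and> l - 1 - (l - 1 - (c - m)) + m = c" if "c \<in> SC" for c
  proof -
    have c: "c \<in> C" "m \<le> c" "c - m \<notin> C" "c < l" using that by (auto simp: SC_def)
    have "l - 1 - (c - m) \<in> Bset l C" using c by (auto simp: Bset_iff)
    moreover have "l - 1 - (c - m) - m \<notin> Bset l C"
    proof -
      have "l - 1 - (c - m) - m = l - 1 - c" using c by simp
      then show ?thesis using c by (auto simp: Bset_iff)
    qed
    ultimately show ?thesis using c by (auto simp: SB_def)
  qed
  have f5: "(-1) ^ (m + 1 + card {y\<in>Bset l C. (l - 1 - (c - m)) - m < y \<and> y < l - 1 - (c - m)}) *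
      W (Aset l C) (insert ((l - 1 - (c - m)) - m) (Bset l C - {l - 1 - (c - m)})) R =
    (-1) ^ card {y\<in>C. c - m < y \<and> y < c} * W (Aset l (insert (c - m) (C - {c}))) (Bset l (insert (c - m) (C - {c}))) R"
    if "c \<in> SC" for c
  proof -
    have c: "c \<in> C" "m \<le> c" "c - m \<notin> C" "c < l" using that by (auto simp: SC_def)
    define b where "b = l - 1 - (c - m)"
    have bm: "b - m = l - 1 - c" "m \<le> b" using c b_def by auto
    define H where "H = {y. c - m < y \<and> y < c \<and> y \<notin> C}"
    have cnt: "card {y\<in>C. c - m < y \<and> y < c} + card {y\<in>Bset l C. b - m < y \<and> y < b} = m - 1"
    proof -
      have u: "{c - m<..<c} = {y\<in>C. c - m < y \<and> y < c} \<union> H" by (auto simp: H_def)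
      have d: "{y\<in>C. c - m < y \<and> y < c} \<inter> H = {}" by (auto simp: H_def)
      have "card {c - m<..<c} = card {y\<in>C. c - m < y \<and> y < c} + card H"
        unfolding u by (rule card_Un_disjoint) (use d in \<open>auto simp: H_def\<close>)
      moreover have "card {c - m<..<c} = m - 1" using c by simp
      moreover have "card {y\<in>Bset l C. b - m < y \<and> y < b} = card H"
      proof -
        have "{y\<in>Bset l C. b - m < y \<and> y < b} = (\<lambda>y. l - 1 - y) ` H"
        proof (rule set_eqI)
          fix z
          show "z \<in> {y\<in>Bset l C. b - m < y \<and> y < b} \<longleftrightarrow> z \<in> (\<lambda>y. l - 1 - y) ` H"
          proof
            assume z: "z \<in> {y\<in>Bset l C. b - m < y \<and> y < b}"
            then have "l - 1 - z \<in> H" "z = l - 1 - (l - 1 - z)" using c bm b_def by (auto simp: Bset_iff H_def)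
            then show "z \<in> (\<lambda>y. l - 1 - y) ` H" by (rule rev_image_eqI)
          next
            assume "z \<in> (\<lambda>y. l - 1 - y) ` H"
            then obtain y where y: "y \<in> H" "z = l - 1 - y" by auto
            then show "z \<in> {y\<in>Bset l C. b - m < y \<and> y < b}" using c bm b_def by (auto simp: Bset_iff H_def)
          qed
        qed
        moreover have "inj_on (\<lambda>y. l - 1 - y) H" using c by (auto simp: inj_on_def H_def)
        ultimately show ?thesis by (simp add: card_image)
      qed
      ultimately show ?thesis by simp
    qed
    have sg: "(-1::int) ^ card {y\<in>C. c - m < y \<and> y < c} = (-1) ^ (m + 1 + card {y\<in>Bset l C. b - m < y \<and> y < b})"
    proof -
      define x where "x = card {y\<in>Bset l C. b - m < y \<and> y < b}"
      have e: "card {y\<in>C. c - m < y \<and> y < c} = (m - 1) - x" using cnt x_def by simp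
      have "(-1::int) ^ ((m - 1) - x) = (-1) ^ ((m - 1) + x)" using cnt x_def by (intro pm1_diff) simp
      also have "(m - 1) + x + 2 = m + 1 + x" using m0 by simp
      then have "(-1::int) ^ ((m - 1) + x) = (-1) ^ (m + 1 + x)" by (metis power_add power2_minus power_one mult_1_right one_power2)
      finally show ?thesis unfolding e x_def by (simp only: e x_def[symmetric])
    qed
    have AA: "Aset l (insert (c - m) (C - {c})) = Aset l C"
      using c by (auto simp: Aset_iff)
    have BB: "Bset l (insert (c - m) (C - {c})) = insert (b - m) (Bset l C - {b})"
      using c m0 bm b_def by (auto simp: Bset_iff)
    show ?thesis unfolding AA BB sg b_def by simp
  qed
  show ?thesis unfolding SC_def[symmetric] SB_def[symmetric]
    by (rule sum.reindex_bij_witness[of SC "\<lambda>b. l - 1 - b + m" "\<lambda>c. l - 1 - (c - m)"]) (use f1 f2 f5 in auto)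
qed

lemma part3:
  assumes finC: "finite C" and m0: "0 < m"
  shows "(\<Sum>c\<in>{c\<in>C. (m \<le> c \<and> c - m \<notin> C) \<and> l \<le> c \<and> c < l + m}.
      (-1) ^ card {y\<in>C. c - m < y \<and> y < c} *
      W (Aset l (insert (c - m) (C - {c}))) (Bset l (insert (c - m) (C - {c}))) R) =
    (\<Sum>a\<in>{a\<in>Aset l C. a < m \<and> m - 1 - a \<in> Bset l C}.
      (-1) ^ (card {x\<in>Aset l C. x < a} + card {y\<in>Bset l C. y < m - 1 - a} + (m - 1 - a)) *
      W (Aset l C - {a}) (Bset l C - {m - 1 - a}) R)"
proof -
  define SC where "SC = {c\<in>C. (m \<le> c \<and> c - m \<notin> C) \<and> l \<le> c \<and> c < l + m}"
  define SA where "SA = {a\<in>Aset l C. a < m \<and> m - 1 - a \<in> Bset l C}"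
  have f2: "a + l \<in> SC" if "a \<in> SA" for a
  proof -
    have a: "a + l \<in> C" "a < m" "m - 1 - a < l" "l - 1 - (m - 1 - a) \<notin> C"
      using that by (auto simp: Aset_iff Bset_iff SA_def)
    have "l - 1 - (m - 1 - a) = a + l - m" using a by simp
    then show ?thesis using a by (auto simp: SC_def)
  qed
  have f1: "c - l \<in> SA \<and> c - l + l = c" if "c \<in> SC" for c
  proof -
    have c: "c \<in> C" "m \<le> c" "c - m \<notin> C" "l \<le> c" "c < l + m" using that by (auto simp: SC_def)
    have "l - 1 - (m - 1 - (c - l)) = c - m" using c by simp
    moreover have "m - 1 - (c - l) < l" using c by simp
    ultimately show ?thesis using c by (auto simp: Aset_iff Bset_iff SA_def)
  qed
  have f5: "(-1) ^ (card {x\<in>Aset l C. x < c - l} + card {y\<in>Bset l C. y < m - 1 - (c - l)} + (m - 1 - (c - l))) *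
      W (Aset l C - {c - l}) (Bset l C - {m - 1 - (c - l)}) R =
    (-1) ^ card {y\<in>C. c - m < y \<and> y < c} * W (Aset l (insert (c - m) (C - {c}))) (Bset l (insert (c - m) (C - {c}))) R"
    if "c \<in> SC" for c
  proof -
    have c: "c \<in> C" "m \<le> c" "c - m \<notin> C" "l \<le> c" "c < l + m" using that by (auto simp: SC_def)
    define a where "a = c - l"
    define b where "b = m - 1 - a"
    have ab: "c = a + l" "b = l - 1 - (c - m)" "c - m < l" using c a_def b_def by auto
    define H where "H = {y. c - m < y \<and> y < l \<and> y \<notin> C}"
    have s1: "card {y\<in>C. c - m < y \<and> y < c} = card {y\<in>C. l \<le> y \<and> y < c} + card {y\<in>C. c - m < y \<and> y < l}"
    proof -
      have u: "{y\<in>C. c - m < y \<and> y < c} = {y\<in>C. l \<le> y \<and> y < c} \<union> {y\<in>C. c - m < y \<and> y < l}"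
        using ab by auto
      show ?thesis unfolding u by (rule card_Un_disjoint) (use finC in auto)
    qed
    have s2: "card {y\<in>C. l \<le> y \<and> y < c} = card {x\<in>Aset l C. x < a}"
    proof -
      have "{x\<in>Aset l C. x < a} = (\<lambda>y. y - l) ` {y\<in>C. l \<le> y \<and> y < c}"
      proof (rule set_eqI)
        fix x
        show "x \<in> {x\<in>Aset l C. x < a} \<longleftrightarrow> x \<in> (\<lambda>y. y - l) ` {y\<in>C. l \<le> y \<and> y < c}"
        proof
          assume "x \<in> {x\<in>Aset l C. x < a}"
          then have "x + l \<in> {y\<in>C. l \<le> y \<and> y < c}" "x = x + l - l" using ab by (auto simp: Aset_iff)
          then show "x \<in> (\<lambda>y. y - l) ` {y\<in>C. l \<le> y \<and> y < c}" by (rule rev_image_eqI)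
        next
          assume "x \<in> (\<lambda>y. y - l) ` {y\<in>C. l \<le> y \<and> y < c}"
          then obtain y where "y \<in> C" "l \<le> y" "y < c" "x = y - l" by auto
          then show "x \<in> {x\<in>Aset l C. x < a}" using ab by (auto simp: Aset_iff)
        qed
      qed
      moreover have "inj_on (\<lambda>y. y - l) {y\<in>C. l \<le> y \<and> y < c}" by (auto simp: inj_on_def)
      ultimately show ?thesis by (simp add: card_image)
    qed
    have s3: "card {y\<in>C. c - m < y \<and> y < l} + card H = b"
    proof -
      have u: "{c - m<..<l} = {y\<in>C. c - m < y \<and> y < l} \<union> H" by (auto simp: H_def)
      have "card {c - m<..<l} = card {y\<in>C. c - m < y \<and> y < l} + card H"
        unfolding u by (rule card_Un_disjoint) (auto simp: H_def)
      moreover have "card {c - m<..<l} = b" using ab by simp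
      ultimately show ?thesis by simp
    qed
    have s4: "card {y\<in>Bset l C. y < b} = card H"
    proof -
      have "{y\<in>Bset l C. y < b} = (\<lambda>y. l - 1 - y) ` H"
      proof (rule set_eqI)
        fix z
        show "z \<in> {y\<in>Bset l C. y < b} \<longleftrightarrow> z \<in> (\<lambda>y. l - 1 - y) ` H"
        proof
          assume z: "z \<in> {y\<in>Bset l C. y < b}"
          then have "l - 1 - z \<in> H" "z = l - 1 - (l - 1 - z)" using ab by (auto simp: Bset_iff H_def)
          then show "z \<in> (\<lambda>y. l - 1 - y) ` H" by (rule rev_image_eqI)
        next
          assume "z \<in> (\<lambda>y. l - 1 - y) ` H"
          then obtain y where y: "y \<in> H" "z = l - 1 - y" by auto
          then show "z \<in> {y\<in>Bset l C. y < b}" using ab by (auto simp: Bset_iff H_def)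
        qed
      qed
      moreover have "inj_on (\<lambda>y. l - 1 - y) H" by (auto simp: inj_on_def H_def)
      ultimately show ?thesis by (simp add: card_image)
    qed
    have sg: "(-1::int) ^ card {y\<in>C. c - m < y \<and> y < c} =
        (-1) ^ (card {x\<in>Aset l C. x < a} + card {y\<in>Bset l C. y < b} + b)"
    proof -
      define x where "x = card {x\<in>Aset l C. x < a}"
      define z where "z = card {y\<in>Bset l C. y < b}"
      have e: "card {y\<in>C. c - m < y \<and> y < c} = x + (b - z)" using s1 s2 s3 s4 x_def z_def by simp
      have zb: "z \<le> b" using s3 s4 z_def by simp
      have "(-1::int) ^ (x + (b - z)) = (-1) ^ x * (-1) ^ (b - z)" by (simp add: power_add)
      also have "\<dots> = (-1) ^ x * (-1) ^ (b + z)" using pm1_diff[OF zb] by simp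
      finally show ?thesis unfolding e x_def[symmetric] z_def[symmetric] by (simp add: power_add ac_simps)
    qed
    have AA: "Aset l (insert (c - m) (C - {c})) = Aset l C - {a}"
      using ab by (auto simp: Aset_iff)
    have BB: "Bset l (insert (c - m) (C - {c})) = Bset l C - {b}"
      using ab c by (auto simp: Bset_iff)
    show ?thesis unfolding AA BB sg a_def b_def by simp
  qed
  show ?thesis unfolding SC_def[symmetric] SA_def[symmetric]
    by (rule sum.reindex_bij_witness[of SC "\<lambda>a. a + l" "\<lambda>c. c - l"]) (use f1 f2 f5 in auto)
qed

lemma W_Nil: "W A B [] = (if A = {} \<and> B = {} then 1 else 0)"
proof -
  have FS0: "T \<in> FS [] \<longleftrightarrow> T = ([], [])" for T
    unfolding FS_def filled_structure_def by (cases T) auto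
  have h0: "hooks ([], []) = {}" unfolding hooks_def by simp
  have "{T. validG fillP fillQ A B [] T} = (if A = {} \<and> B = {} then {([], [])} else {})"
    unfolding validG_def FS0 using h0 by auto
  moreover have "sgnT ([], []) = 1" unfolding sgnT_def h0 n_vertical_def by simp
  ultimately show ?thesis unfolding W_def by simp
qed

lemma base_equiv:
  assumes dv: "dec l v"
  shows "(\<forall>j<l. v j = l - 1 - j) \<longleftrightarrow> (Aset l (v ` {0..<l}) = {} \<and> Bset l (v ` {0..<l}) = {})"
proof
  assume h: "\<forall>j<l. v j = l - 1 - j"
  have C: "v ` {0..<l} = {0..<l}"
  proof (rule set_eqI)
    fix x show "x \<in> v ` {0..<l} \<longleftrightarrow> x \<in> {0..<l}"
    proof
      assume "x \<in> v ` {0..<l}"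
      then obtain j where "j < l" "x = v j" by auto
      then show "x \<in> {0..<l}" using h by auto
    next
      assume x: "x \<in> {0..<l}"
      then have "v (l - 1 - x) = x" using h by auto
      moreover have "l - 1 - x \<in> {0..<l}" using x by auto
      ultimately show "x \<in> v ` {0..<l}" by (metis imageI)
    qed
  qed
  show "Aset l (v ` {0..<l}) = {} \<and> Bset l (v ` {0..<l}) = {}"
    unfolding C by (auto simp: Aset_iff Bset_iff)
next
  assume h: "Aset l (v ` {0..<l}) = {} \<and> Bset l (v ` {0..<l}) = {}"
  have small: "v j < l" if "j < l" for j
  proof (rule ccontr)
    assume "\<not> v j < l"
    then have "(v j - l) + l \<in> v ` {0..<l}" using that by auto
    then have "v j - l \<in> Aset l (v ` {0..<l})" by (simp add: Aset_iff)
    then show False using h by simp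
  qed
  show "\<forall>j<l. v j = l - 1 - j"
  proof (intro allI impI)
    fix j assume jl: "j < l"
    have "v j + j \<le> v 0" using dec_gap[OF dv, of 0 j] jl by simp
    moreover have "v 0 < l" using small jl by simp
    moreover have "v (l - 1) + (l - 1 - j) \<le> v j" using dec_gap[OF dv, of j "l - 1"] jl by simp
    ultimately show "v j = l - 1 - j" by linarith
  qed
qed

lemma main_ind:
  assumes "\<forall>x\<in>set ms. 0 < x" "dec l v"
  shows "Gr l v ms = W (Aset l (v ` {0..<l})) (Bset l (v ` {0..<l})) (rev ms)"
  using assms
proof (induction ms arbitrary: v)
  case Nil
  show ?case using Gr_base[OF Nil.prems(2)] base_equiv[OF Nil.prems(2)] W_Nil by simp
next
  case (Cons m ms)
  have m0: "0 < m" using Cons.prems by simp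
  define F where "F C = W (Aset l C) (Bset l C) (rev ms)" for C
  have IH: "\<forall>v'. dec l v' \<longrightarrow> Gr l v' ms = F (v' ` {0..<l})"
    using Cons.IH Cons.prems unfolding F_def by simp
  define C where "C = v ` {0..<l}"
  have finC: "finite C" unfolding C_def by simp
  define t where "t c = (-1) ^ card {y\<in>C. c - m < y \<and> y < c} * F (insert (c - m) (C - {c}))" for c
  define Cg where "Cg = {c\<in>C. m \<le> c \<and> c - m \<notin> C}"
  note WS = W_snoc[OF m0 finite_Aset[OF finC, of l] finite_Bset[of l C], where \<rho> = "rev ms"]
  have "Gr l v (m # ms) = sum t Cg"
    using LHS_sum[OF Cons.prems(2) m0 IH] unfolding t_def Cg_def C_def .
  also have "\<dots> = sum t {c\<in>Cg. l + m \<le> c} + sum t {c\<in>Cg. c < l} + sum t {c\<in>Cg. l \<le> c \<and> c < l + m}"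
    by (rule sum_split3) (auto simp: Cg_def finC)
  also have "sum t {c\<in>Cg. l + m \<le> c} =
    (\<Sum>a\<in>{a\<in>Aset l C. m \<le> a \<and> a - m \<notin> Aset l C}.
      (-1) ^ card {x\<in>Aset l C. a - m < x \<and> x < a} * W (insert (a - m) (Aset l C - {a})) (Bset l C) (rev ms))"
  proof -
    have "{c\<in>Cg. l + m \<le> c} = {c\<in>C. (m \<le> c \<and> c - m \<notin> C) \<and> l + m \<le> c}" by (auto simp: Cg_def)
    then show ?thesis using part1[OF finC m0, of l "rev ms"] unfolding t_def F_def by simp
  qed
  also have "sum t {c\<in>Cg. c < l} =
    (\<Sum>b\<in>{b\<in>Bset l C. m \<le> b \<and> b - m \<notin> Bset l C}.
      (-1) ^ (m + 1 + card {y\<in>Bset l C. b - m < y \<and> y < b}) * W (Aset l C) (insert (b - m) (Bset l C - {b})) (rev ms))"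
  proof -
    have "{c\<in>Cg. c < l} = {c\<in>C. (m \<le> c \<and> c - m \<notin> C) \<and> c < l}" by (auto simp: Cg_def)
    then show ?thesis using part2[OF finC m0, of l "rev ms"] unfolding t_def F_def by simp
  qed
  also have "sum t {c\<in>Cg. l \<le> c \<and> c < l + m} =
    (\<Sum>a\<in>{a\<in>Aset l C. a < m \<and> m - 1 - a \<in> Bset l C}.
      (-1) ^ (card {x\<in>Aset l C. x < a} + card {y\<in>Bset l C. y < m - 1 - a} + (m - 1 - a)) *
      W (Aset l C - {a}) (Bset l C - {m - 1 - a}) (rev ms))"
  proof -
    have "{c\<in>Cg. l \<le> c \<and> c < l + m} = {c\<in>C. (m \<le> c \<and> c - m \<notin> C) \<and> l \<le> c \<and> c < l + m}" by (auto simp: Cg_def)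
    then show ?thesis using part3[OF finC m0, of l "rev ms"] unfolding t_def F_def by simp
  qed
  finally show ?case unfolding C_def[symmetric] using WS by simp
qed

lemma mset_cond:
  assumes dx: "distinct xs" and fin: "finite H"
  shows "image_mset f (mset_set H) = mset xs \<longleftrightarrow> inj_on f H \<and> f ` H = set xs"
proof
  assume h: "image_mset f (mset_set H) = mset xs"
  have im: "f ` H = set xs"
  proof -
    have "set_mset (image_mset f (mset_set H)) = f ` H" using fin by simp
    then show ?thesis using h by simp
  qed
  have "card H = length xs"
  proof -
    have "size (image_mset f (mset_set H)) = card H" by simp
    then show ?thesis using h by simp
  qed
  then have "card (f ` H) = card H" using im dx by (simp add: distinct_card)
  then have "inj_on f H" using fin by (simp add: inj_on_iff_eq_card)
  then show "inj_on f H \<and> f ` H = set xs" using im by simp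
next
  assume h: "inj_on f H \<and> f ` H = set xs"
  then show "image_mset f (mset_set H) = mset xs"
    using image_mset_mset_set[of f H] mset_set_set[OF dx] by simp
qed

lemma yd_mono:
  assumes "young_diagram lam" "i \<le> j" "j < length lam"
  shows "lam ! j \<le> lam ! i"
proof -
  have s: "sorted (rev lam)" using assms(1) by (simp add: young_diagram_def)
  define l where "l = length lam"
  have "rev lam ! (l - 1 - j) \<le> rev lam ! (l - 1 - i)"
    using s assms(2,3) unfolding sorted_iff_nth_mono l_def by simp
  moreover have "rev lam ! (l - 1 - j) = lam ! j" using assms(3) l_def by (simp add: rev_nth Suc_diff_Suc)
  moreover have "rev lam ! (l - 1 - i) = lam ! i" using assms(2,3) l_def by (simp add: rev_nth Suc_diff_Suc)
  ultimately show ?thesis by simp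
qed

lemma prefix_filter:
  assumes yd: "young_diagram lam" and j: "j < length lam"
  shows "j < length (filter (\<lambda>x. t \<le> x) lam) \<longleftrightarrow> t \<le> lam ! j"
proof -
  define S where "S = {i. i < length lam \<and> t \<le> lam ! i}"
  have "S = {..<card S}"
  proof (rule downclosed_nat)
    fix i i' assume "i \<le> i'" "i' \<in> S"
    then have "lam ! i' \<le> lam ! i" "i' < length lam" "t \<le> lam ! i'" using yd_mono[OF yd] unfolding S_def by auto
    then show "i \<in> S" using \<open>i \<le> i'\<close> unfolding S_def by auto
  qed (simp add: S_def)
  moreover have "length (filter (\<lambda>x. t \<le> x) lam) = card S"
    unfolding S_def by (rule length_filter_conv_card)
  ultimately show ?thesis using j unfolding S_def by (metis (no_types, lifting) lessThan_iff mem_Collect_eq)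
qed

lemma dec_beta:
  assumes yd: "young_diagram lam"
  shows "dec (length lam) (\<lambda>j. lam ! j + (length lam - 1 - j))"
  unfolding dec_def
proof (intro allI impI)
  fix i i' assume "i < i'" "i' < length lam"
  then show "lam ! i' + (length lam - 1 - i') < lam ! i + (length lam - 1 - i)"
    using yd_mono[OF yd, of i i'] by simp
qed

lemma diag_set:
  assumes yd: "young_diagram lam"
  shows "{i. i < length lam \<and> Suc i \<le> lam ! i} = {..<diag lam}"
  unfolding diag_def
proof (rule downclosed_nat)
  fix i i' assume a: "i \<le> i'" "i' \<in> {i. i < length lam \<and> Suc i \<le> lam ! i}"
  then have "lam ! i' \<le> lam ! i" using yd_mono[OF yd] by simp
  then show "i \<in> {i. i < length lam \<and> Suc i \<le> lam ! i}" using a by auto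
qed simp

lemma Aset_frob:
  assumes yd: "young_diagram lam"
  shows "Aset (length lam) ((\<lambda>j. lam ! j + (length lam - 1 - j)) ` {0..<length lam}) = set (frob_p lam)"
proof (rule set_eqI)
  fix x
  define l where "l = length lam"
  have "x \<in> Aset l ((\<lambda>j. lam ! j + (l - 1 - j)) ` {0..<l}) \<longleftrightarrow> (\<exists>j\<in>{0..<l}. x + l = lam ! j + (l - 1 - j))"
    by (simp only: Aset_iff image_iff)
  also have "\<dots> \<longleftrightarrow> (\<exists>j\<in>{i. i < l \<and> Suc i \<le> lam ! i}. x = lam ! j - Suc j)"
  proof
    assume "\<exists>j\<in>{0..<l}. x + l = lam ! j + (l - 1 - j)"
    then obtain j where "j < l" "x + l = lam ! j + (l - 1 - j)" by auto
    then show "\<exists>j\<in>{i. i < l \<and> Suc i \<le> lam ! i}. x = lam ! j - Suc j" by (intro bexI[of _ j]) auto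
  next
    assume "\<exists>j\<in>{i. i < l \<and> Suc i \<le> lam ! i}. x = lam ! j - Suc j"
    then obtain j where "j < l" "Suc j \<le> lam ! j" "x = lam ! j - Suc j" by auto
    then show "\<exists>j\<in>{0..<l}. x + l = lam ! j + (l - 1 - j)" by (intro bexI[of _ j]) auto
  qed
  also have "\<dots> \<longleftrightarrow> (\<exists>j\<in>{..<diag lam}. x = lam ! j - Suc j)" using diag_set[OF yd] l_def by simp
  also have "\<dots> \<longleftrightarrow> x \<in> set (frob_p lam)" unfolding frob_p_def by auto
  finally show "x \<in> Aset (length lam) ((\<lambda>j. lam ! j + (length lam - 1 - j)) ` {0..<length lam}) \<longleftrightarrow> x \<in> set (frob_p lam)"
    unfolding l_def .
qed

lemma diag_le: "diag lam \<le> length lam"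
proof -
  have "{i. i < length lam \<and> Suc i \<le> lam ! i} \<subseteq> {..<length lam}" by auto
  then show ?thesis unfolding diag_def by (metis card_lessThan card_mono finite_lessThan)
qed

lemma in_diag:
  assumes yd: "young_diagram lam" and i: "i < diag lam"
  shows "i < length lam \<and> Suc i \<le> lam ! i"
  using diag_set[OF yd] i by auto

lemma conj_len_mono: "conj_len lam (Suc (Suc i)) \<le> conj_len lam (Suc i)"
proof -
  have "{j. j < length lam \<and> Suc (Suc i) \<le> lam ! j} \<subseteq> {j. j < length lam \<and> Suc i \<le> lam ! j}" by auto
  then show ?thesis unfolding conj_len_def length_filter_conv_card by (rule card_mono[rotated]) simp
qed

lemma distinct_frob_p:
  assumes yd: "young_diagram lam"
  shows "distinct (frob_p lam)"
proof -
  define p where "p i = lam ! i - Suc i" for i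
  have "dec (diag lam) p"
  proof (rule dec_local)
    fix i assume i: "Suc i < diag lam"
    have a: "Suc i < length lam" "Suc (Suc i) \<le> lam ! Suc i" using in_diag[OF yd i] by auto
    have "lam ! Suc i \<le> lam ! i" using yd_mono[OF yd, of i "Suc i"] a by simp
    then show "p (Suc i) < p i" using a unfolding p_def by simp
  qed
  then have "inj_on p {0..<diag lam}" by (rule dec_inj)
  then show ?thesis unfolding frob_p_def p_def[symmetric] by (simp add: distinct_map)
qed

lemma distinct_frob_q:
  assumes yd: "young_diagram lam"
  shows "distinct (frob_q lam)"
proof -
  define q where "q i = conj_len lam (Suc i) - Suc i" for i
  have "dec (diag lam) q"
  proof (rule dec_local)
    fix i assume i: "Suc i < diag lam"
    have a: "Suc i < length lam" "Suc (Suc i) \<le> lam ! Suc i" using in_diag[OF yd i] by auto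
    have "Suc i < conj_len lam (Suc (Suc i))"
      using prefix_filter[OF yd a(1), of "Suc (Suc i)"] a(2) unfolding conj_len_def by simp
    then show "q (Suc i) < q i" using conj_len_mono[of lam i] unfolding q_def by simp
  qed
  then have "inj_on q {0..<diag lam}" by (rule dec_inj)
  then show ?thesis unfolding frob_q_def q_def[symmetric] by (simp add: distinct_map)
qed

lemma Bset_frob:
  assumes yd: "young_diagram lam"
  shows "Bset (length lam) ((\<lambda>j. lam ! j + (length lam - 1 - j)) ` {0..<length lam}) = set (frob_q lam)"
proof -
  define l where "l = length lam"
  define \<beta> where "\<beta> j = lam ! j + (l - 1 - j)" for j
  define C where "C = \<beta> ` {0..<l}"
  define d where "d = diag lam"
  have dv: "dec l \<beta>" using dec_beta[OF yd] unfolding l_def \<beta>_def .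
  have sub: "set (frob_q lam) \<subseteq> Bset l C"
  proof
    fix y assume "y \<in> set (frob_q lam)"
    then obtain i where i: "i < d" "y = conj_len lam (Suc i) - Suc i" unfolding frob_q_def d_def by auto
    define L where "L = conj_len lam (Suc i)"
    have a: "i < l" "Suc i \<le> lam ! i" using in_diag[OF yd] i d_def l_def by auto
    have pf: "\<And>j. j < l \<Longrightarrow> (j < L \<longleftrightarrow> Suc i \<le> lam ! j)"
      using prefix_filter[OF yd] unfolding L_def conj_len_def l_def by simp
    have iL: "Suc i \<le> L" using pf[of i] a by simp
    have Ll: "L \<le> l" unfolding L_def conj_len_def l_def by simp
    have yL: "y = L - Suc i" using i L_def by simp
    have "l - 1 - y \<notin> C"
    proof
      assume "l - 1 - y \<in> C"
      then obtain j where j: "j < l" "\<beta> j = l - 1 - y" unfolding C_def by auto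
      show False
      proof (cases "Suc i \<le> lam ! j")
        case True
        then have "j < L" using pf j(1) by simp
        then show False using j True iL Ll yL unfolding \<beta>_def by linarith
      next
        case False
        then have "\<not> j < L" using pf[OF j(1)] by simp
        then have "L \<le> j" by simp
        then show False using j False iL Ll yL unfolding \<beta>_def by linarith
      qed
    qed
    moreover have "y < l" using yL iL Ll by linarith
    ultimately show "y \<in> Bset l C" by (simp add: Bset_iff)
  qed
  have cardq: "card (set (frob_q lam)) = d"
    using distinct_card[OF distinct_frob_q[OF yd]] unfolding frob_q_def d_def by simp
  have cardA: "card {c\<in>C. l \<le> c} = d"
  proof -
    have "Aset l C = (\<lambda>c. c - l) ` {c\<in>C. l \<le> c}" by (simp add: Aset_def)
    moreover have "inj_on (\<lambda>c. c - l) {c\<in>C. l \<le> c}" by (auto simp: inj_on_def)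
    ultimately have "card (Aset l C) = card {c\<in>C. l \<le> c}" by (simp add: card_image)
    moreover have "Aset l C = set (frob_p lam)" using Aset_frob[OF yd] unfolding C_def \<beta>_def l_def .
    moreover have "card (set (frob_p lam)) = d"
      using distinct_card[OF distinct_frob_p[OF yd]] unfolding frob_p_def d_def by simp
    ultimately show ?thesis by simp
  qed
  have cardC: "card C = l" unfolding C_def using dec_inj[OF dv] by (simp add: card_image)
  have finC: "finite C" unfolding C_def by simp
  have split: "card C = card {c\<in>C. l \<le> c} + card {c\<in>C. c < l}"
  proof -
    have "C = {c\<in>C. l \<le> c} \<union> {c\<in>C. c < l}" by auto
    then have "card C = card ({c\<in>C. l \<le> c} \<union> {c\<in>C. c < l})" by simp
    also have "\<dots> = card {c\<in>C. l \<le> c} + card {c\<in>C. c < l}"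
      by (rule card_Un_disjoint) (use finC in auto)
    finally show ?thesis .
  qed
  have cardB: "card (Bset l C) = d"
  proof -
    have "inj_on (\<lambda>c. l - 1 - c) ({0..<l} - C)" by (auto simp: inj_on_def)
    then have "card (Bset l C) = card ({0..<l} - C)" unfolding Bset_def by (simp add: card_image)
    also have "\<dots> = card {0..<l} - card ({0..<l} \<inter> C)" by (rule card_Diff_subset_Int) (simp add: finC)
    also have "{0..<l} \<inter> C = {c\<in>C. c < l}" by auto
    finally show ?thesis using cardA cardC split by simp
  qed
  have "set (frob_q lam) = Bset l C"
    by (rule card_subset_eq) (use sub cardq cardB in \<open>auto simp: Bset_def\<close>)
  then show ?thesis unfolding C_def \<beta>_def l_def by simp
qed

theorem theorem1p2p1:
  fixes lam rho :: "nat list"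
  assumes "young_diagram lam"
    and "\<forall>x\<in>set rho. 0 < x"
    and "sum_list rho = sum_list lam"
  shows "sn_char lam rho =
    (\<Sum>T \<in> {T. filled_structure (length rho) T \<and> map bcard (snd T) = rho \<and>
               image_mset (fillP T) (mset_set (hooks T)) = mset (frob_p lam) \<and>
               image_mset (fillQ T) (mset_set (hooks T)) = mset (frob_q lam)}.
       sgnT T)"
proof -
  define l where "l = length lam"
  define \<beta> where "\<beta> j = lam ! j + (l - 1 - j)" for j
  have dv: "dec l \<beta>" using dec_beta[OF assms(1)] unfolding l_def \<beta>_def .
  have pos: "\<forall>x\<in>set (rev rho). 0 < x" using assms(2) by simp
  have "sn_char lam rho = Gf l \<beta> rho" unfolding sn_char_Gf l_def \<beta>_def ..
  also have "\<dots> = Gr l \<beta> (rev rho)" by (rule Gf_Gr)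
  also have "\<dots> = W (Aset l (\<beta> ` {0..<l})) (Bset l (\<beta> ` {0..<l})) (rev (rev rho))"
    by (rule main_ind[OF pos dv])
  also have "\<dots> = W (set (frob_p lam)) (set (frob_q lam)) rho"
    using Aset_frob[OF assms(1)] Bset_frob[OF assms(1)] unfolding l_def \<beta>_def by simp
  also have "\<dots> = (\<Sum>T \<in> {T. filled_structure (length rho) T \<and> map bcard (snd T) = rho \<and>
               image_mset (fillP T) (mset_set (hooks T)) = mset (frob_p lam) \<and>
               image_mset (fillQ T) (mset_set (hooks T)) = mset (frob_q lam)}. sgnT T)"
  proof -
    have "{T. validG fillP fillQ (set (frob_p lam)) (set (frob_q lam)) rho T} =
      {T. filled_structure (length rho) T \<and> map bcard (snd T) = rho \<and>
               image_mset (fillP T) (mset_set (hooks T)) = mset (frob_p lam) \<and>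
               image_mset (fillQ T) (mset_set (hooks T)) = mset (frob_q lam)}"
      unfolding validG_def FS_def
      using mset_cond[OF distinct_frob_p[OF assms(1)] finite_hooks]
        mset_cond[OF distinct_frob_q[OF assms(1)] finite_hooks]
      by auto
    then show ?thesis unfolding W_def by simp
  qed
  finally show ?thesis .
qed

end
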